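(* Let $a=1$, $b=-1$. For all $(J,E)\in D_1$, $$\Delta:=\frac{\partial\tilde P}{\partial E}\frac{\partial\tilde M}{\partial J}-\frac{\partial\tilde M}{\partial E}\frac{\partial\tilde P}{\partial J}<0.$$
   Context: With $a=1$, $b=-1$, let $V_J(r)=\frac{J^2}{2r^2}+\frac{r^2}{2}-\frac{r^4}{4}$. For $0<J<\sqrt{4/27}$ write $J=q(1-q^2)=Q(1-Q^2)$ with $0<q<1/\sqrt3<Q<1$, and set $E_-(J)=\frac14(1-Q^2)(3Q^2+1)$, $E_+(J)=\frac14(1-q^2)(3q^2+1)$. Let $D_1=\{(J,E):0<J<\sqrt{4/27},\ E_-(J)<E<E_+(J)\}$. For $(J,E)\in D_1$, let $r_1<r_2<r_3$ be the positive roots of $E-V_J(r)$ and define $T(J,E)=2\int_{r_1}^{r_2}\frac{dr}{\sqrt{2(E-V_J(r))}}$, $\tilde M(J,E)=\int_{r_1}^{r_2}\frac{r^2\,dr}{\sqrt{2(E-V_J(r))}}$ and $\tilde P(J,E)=\frac12 J\,T(J,E)$. These are the period, mass $\frac12\int_0^T|u|^2$ and momentum $\frac12\operatorname{Im}\int_0^Tu\bar u_x$ of the solution of $u_{xx}+u-|u|^2u=0$ with $\operatorname{Im}(u\bar u_x)=J$ and $\frac12|u_x|^2+\frac12|u|^2-\frac14|u|^4=E$. *)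

theory Defs
  imports "HOL-Analysis.Analysis"
begin

text \<open>Effective potential with a = 1, b = -1.\<close>
definition VJ :: "real \<Rightarrow> real \<Rightarrow> real" where
  "VJ J r = J^2 / (2 * r^2) + r^2 / 2 - r^4 / 4"

definition qsmall :: "real \<Rightarrow> real" where
  "qsmall J = (THE q. 0 < q \<and> q < 1 / sqrt 3 \<and> J = q * (1 - q^2))"

definition Qbig :: "real \<Rightarrow> real" where
  "Qbig J = (THE Q. 1 / sqrt 3 < Q \<and> Q < 1 \<and> J = Q * (1 - Q^2))"

definition Eminus :: "real \<Rightarrow> real" where
  "Eminus J = (let Q = Qbig J in (1 - Q^2) * (3 * Q^2 + 1) / 4)"

definition Eplus :: "real \<Rightarrow> real" where
  "Eplus J = (let q = qsmall J in (1 - q^2) * (3 * q^2 + 1) / 4)"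

definition D1 :: "(real \<times> real) set" where
  "D1 = {(J, E). 0 < J \<and> J < sqrt (4 / 27) \<and> Eminus J < E \<and> E < Eplus J}"

definition roots :: "real \<Rightarrow> real \<Rightarrow> real list" where
  "roots J E = sorted_list_of_set {r. 0 < r \<and> VJ J r = E}"

definition r1 :: "real \<Rightarrow> real \<Rightarrow> real" where "r1 J E = roots J E ! 0"
definition r2 :: "real \<Rightarrow> real \<Rightarrow> real" where "r2 J E = roots J E ! 1"

text \<open>Period, mass and momentum (improper integrals, as Henstock-Kurzweil integrals).\<close>
definition Tper :: "real \<Rightarrow> real \<Rightarrow> real" where
  "Tper J E = 2 * integral {r1 J E .. r2 J E} (\<lambda>r. 1 / sqrt (2 * (E - VJ J r)))"

definition Mt :: "real \<Rightarrow> real \<Rightarrow> real" where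
  "Mt J E = integral {r1 J E .. r2 J E} (\<lambda>r. r^2 / sqrt (2 * (E - VJ J r)))"

definition Pt :: "real \<Rightarrow> real \<Rightarrow> real" where
  "Pt J E = J * Tper J E / 2"

end

theory Submission
  imports Defs "HOL-Analysis.Analysis"
begin


definition Dl :: "real \<Rightarrow> real \<Rightarrow> real \<Rightarrow> real" where
  "Dl A B t = sqrt (A * (cos t)^2 + B * (sin t)^2)"

definition Wf :: "real \<Rightarrow> real \<Rightarrow> real" where
  "Wf A B = integral {0..pi/2} (\<lambda>t. 1 / Dl A B t)"
definition Nf :: "real \<Rightarrow> real \<Rightarrow> real" where
  "Nf A B = integral {0..pi/2} (\<lambda>t. Dl A B t)"
definition Qf :: "real \<Rightarrow> real \<Rightarrow> real" where
  "Qf A B = integral {0..pi/2} (\<lambda>t. 1 / (Dl A B t)^3)"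

lemma Dl_arg_pos:
  fixes A B t :: real
  assumes "A > 0" "B > 0"
  shows "A * (cos t)^2 + B * (sin t)^2 > 0"
proof -
  have 1: "min A B * (cos t)^2 \<le> A * (cos t)^2" by (metis min.cobounded1 mult_right_mono zero_le_power2)
  have 2: "min A B * (sin t)^2 \<le> B * (sin t)^2" by (metis min.cobounded2 mult_right_mono zero_le_power2)
  have 3: "min A B * (sin t)^2 + min A B * (cos t)^2 = min A B"
    by (metis distrib_left mult.right_neutral sin_cos_squared_add)
  have "min A B > 0" using assms by simp
  then show ?thesis using 1 2 3 by linarith
qed

lemma Dl_pos: "A > 0 \<Longrightarrow> B > 0 \<Longrightarrow> Dl A B t > 0"
  unfolding Dl_def using Dl_arg_pos by simp

lemma Dl_sq: "A > 0 \<Longrightarrow> B > 0 \<Longrightarrow> (Dl A B t)^2 = A * (cos t)^2 + B * (sin t)^2"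
  unfolding Dl_def using Dl_arg_pos[of A B t] by simp

lemma Dl_cont: "A > 0 \<Longrightarrow> B > 0 \<Longrightarrow> continuous_on S (Dl A B)"
  unfolding Dl_def by (intro continuous_intros)

lemma Dl_deriv:
  fixes A B t :: real
  assumes "A > 0" "B > 0"
  shows "(Dl A B has_real_derivative ((B - A) * sin t * cos t / Dl A B t)) (at t)"
proof -
  have p: "A * (cos t)^2 + B * (sin t)^2 > 0" using Dl_arg_pos assms .
  have g: "((\<lambda>t. A * (cos t)^2 + B * (sin t)^2) has_real_derivative
      (A * (2 * cos t * (- sin t)) + B * (2 * sin t * cos t))) (at t)"
    by (auto intro!: derivative_eq_intros)
  have "((\<lambda>t. sqrt (A * (cos t)^2 + B * (sin t)^2)) has_real_derivative
      inverse (sqrt (A * (cos t)^2 + B * (sin t)^2)) / 2 * (A * (2 * cos t * (- sin t)) + B * (2 * sin t * cos t))) (at t)"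
    by (rule DERIV_chain2[OF DERIV_real_sqrt[OF p] g])
  moreover have "inverse (sqrt (A * (cos t)^2 + B * (sin t)^2)) / 2 * (A * (2 * cos t * (- sin t)) + B * (2 * sin t * cos t))
      = (B - A) * sin t * cos t / Dl A B t"
    using p unfolding Dl_def by (simp add: field_simps)
  ultimately show ?thesis unfolding Dl_def by simp
qed


definition C3 :: "real \<Rightarrow> real \<Rightarrow> real" where
  "C3 A B = integral {0..pi/2} (\<lambda>t. (cos t)^2 / (Dl A B t)^3)"
definition S3 :: "real \<Rightarrow> real \<Rightarrow> real" where
  "S3 A B = integral {0..pi/2} (\<lambda>t. (sin t)^2 / (Dl A B t)^3)"
definition C1 :: "real \<Rightarrow> real \<Rightarrow> real" where
  "C1 A B = integral {0..pi/2} (\<lambda>t. (cos t)^2 / Dl A B t)"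
definition S1 :: "real \<Rightarrow> real \<Rightarrow> real" where
  "S1 A B = integral {0..pi/2} (\<lambda>t. (sin t)^2 / Dl A B t)"

lemma integral_combo:
  fixes f g k :: "real \<Rightarrow> real"
  assumes "\<And>t. m * f t = a * g t + b * k t" "g integrable_on S" "k integrable_on S"
  shows "m * integral S f = a * integral S g + b * integral S k"
proof -
  have "m * integral S f = integral S (\<lambda>t. m * f t)" by simp
  also have "\<dots> = integral S (\<lambda>t. a * g t + b * k t)" using assms(1) by simp
  also have "\<dots> = integral S (\<lambda>t. a * g t) + integral S (\<lambda>t. b * k t)"
    by (rule integral_add) (use assms(2,3) in \<open>auto intro: integrable_on_mult_right\<close>)
  finally show ?thesis by simp
qed

lemma alg_div3: "(d::real) \<noteq> 0 \<Longrightarrow> (d^2 - B) / d^3 = 1 * (1/d) + (-B) * (1/d^3)"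
  by (simp add: field_simps power3_eq_cube power2_eq_square)
lemma alg_div3': "(d::real) \<noteq> 0 \<Longrightarrow> (A - d^2) / d^3 = A * (1/d^3) + (-1) * (1/d)"
  by (simp add: field_simps power3_eq_cube power2_eq_square)
lemma alg_div1: "(d::real) \<noteq> 0 \<Longrightarrow> (d^2 - B) / d = 1 * d + (-B) * (1/d)"
  by (simp add: field_simps power2_eq_square)
lemma alg_div1': "(d::real) \<noteq> 0 \<Longrightarrow> (A - d^2) / d = A * (1/d) + (-1) * d"
  by (simp add: field_simps power2_eq_square)

context
  fixes A B :: real
  assumes Apos: "A > 0" and Bpos: "B > 0"
begin

lemma Dl_ne: "Dl A B t \<noteq> 0" using Dl_pos[OF Apos Bpos] by (metis less_irrefl)

lemma Dl_contU: "continuous_on S (Dl A B)" using Dl_cont[OF Apos Bpos] .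

lemma int_W: "(\<lambda>t. 1 / Dl A B t) integrable_on {0..pi/2}"
  by (intro integrable_continuous_interval continuous_intros Dl_contU) (simp add: Dl_ne)
lemma int_N: "(\<lambda>t. Dl A B t) integrable_on {0..pi/2}"
  by (intro integrable_continuous_interval continuous_intros Dl_contU)
lemma int_Q: "(\<lambda>t. 1 / (Dl A B t)^3) integrable_on {0..pi/2}"
  by (intro integrable_continuous_interval continuous_intros Dl_contU) (simp add: Dl_ne)

lemma Dl_sq': "(Dl A B t)^2 = A * (cos t)^2 + B * (sin t)^2"
  using Dl_sq[OF Apos Bpos] .

lemma Dl_sq_c: "(A - B) * (cos t)^2 = (Dl A B t)^2 - B"
proof -
  have s: "(sin t)^2 = 1 - (cos t)^2" by (simp add: sin_squared_eq)
  show ?thesis using Dl_sq'[of t] s by (simp add: algebra_simps)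
qed
lemma Dl_sq_s: "(A - B) * (sin t)^2 = A - (Dl A B t)^2"
proof -
  have s: "(cos t)^2 = 1 - (sin t)^2" by (simp add: cos_squared_eq)
  show ?thesis using Dl_sq'[of t] s by (simp add: algebra_simps)
qed

lemma C3_rel: "(A - B) * C3 A B = Wf A B - B * Qf A B"
proof -
  have "(A - B) * C3 A B = 1 * Wf A B + (-B) * Qf A B"
    unfolding C3_def Wf_def Qf_def
  proof (rule integral_combo[OF _ int_W int_Q])
    fix t :: real
    have "(A - B) * ((cos t)^2 / (Dl A B t)^3) = ((Dl A B t)^2 - B) / (Dl A B t)^3"
      using Dl_sq_c[of t] by (metis times_divide_eq_right)
    then show "(A - B) * ((cos t)^2 / (Dl A B t)^3) = 1 * (1 / Dl A B t) + (-B) * (1 / (Dl A B t)^3)"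
      using alg_div3[OF Dl_ne] by simp
  qed
  then show ?thesis by simp
qed

lemma S3_rel: "(A - B) * S3 A B = A * Qf A B - Wf A B"
proof -
  have "(A - B) * S3 A B = A * Qf A B + (-1) * Wf A B"
    unfolding S3_def Wf_def Qf_def
  proof (rule integral_combo[OF _ int_Q int_W])
    fix t :: real
    have "(A - B) * ((sin t)^2 / (Dl A B t)^3) = (A - (Dl A B t)^2) / (Dl A B t)^3"
      using Dl_sq_s[of t] by (metis times_divide_eq_right)
    then show "(A - B) * ((sin t)^2 / (Dl A B t)^3) = A * (1 / (Dl A B t)^3) + (-1) * (1 / Dl A B t)"
      using alg_div3'[OF Dl_ne] by simp
  qed
  then show ?thesis by simp
qed

lemma C1_rel: "(A - B) * C1 A B = Nf A B - B * Wf A B"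
proof -
  have "(A - B) * C1 A B = 1 * Nf A B + (-B) * Wf A B"
    unfolding C1_def Wf_def Nf_def
  proof (rule integral_combo[OF _ int_N int_W])
    fix t :: real
    have "(A - B) * ((cos t)^2 / (Dl A B t)) = ((Dl A B t)^2 - B) / (Dl A B t)"
      using Dl_sq_c[of t] by (metis times_divide_eq_right)
    then show "(A - B) * ((cos t)^2 / (Dl A B t)) = 1 * (Dl A B t) + (-B) * (1 / (Dl A B t))"
      using alg_div1[OF Dl_ne] by simp
  qed
  then show ?thesis by simp
qed

lemma S1_rel: "(A - B) * S1 A B = A * Wf A B - Nf A B"
proof -
  have "(A - B) * S1 A B = A * Wf A B + (-1) * Nf A B"
    unfolding S1_def Wf_def Nf_def
  proof (rule integral_combo[OF _ int_W int_N])
    fix t :: real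
    have "(A - B) * ((sin t)^2 / (Dl A B t)) = (A - (Dl A B t)^2) / (Dl A B t)"
      using Dl_sq_s[of t] by (metis times_divide_eq_right)
    then show "(A - B) * ((sin t)^2 / (Dl A B t)) = A * (1 / (Dl A B t)) + (-1) * (Dl A B t)"
      using alg_div1'[OF Dl_ne] by simp
  qed
  then show ?thesis by simp
qed

end


lemma refl_int:
  fixes f :: "real \<Rightarrow> real"
  assumes "(f has_integral i) {0..c}"
  shows "((\<lambda>t. f (c - t)) has_integral i) {0..c}"
proof -
  have "((\<lambda>x. f ((-1) *\<^sub>R x + c)) has_integral (1 / (\<bar>-1\<bar> ^ DIM(real))) *\<^sub>R i)
     ((\<lambda>x. (1 / (-1)) *\<^sub>R x + -((1 / (-1)) *\<^sub>R c)) ` cbox 0 c)"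
    by (rule has_integral_affinity) (use assms in auto)
  moreover have "((\<lambda>x. (1 / (-1)) *\<^sub>R x + -((1 / (-1)) *\<^sub>R c)) ` cbox 0 c) = {0..c}"
  proof (cases "0 \<le> c")
    case True
    then show ?thesis by (auto simp: image_iff intro!: bexI[where x = "c - _"]) 
  next
    case False then show ?thesis by auto
  qed
  ultimately show ?thesis by simp
qed

lemma alg_ibp:
  fixes A B p q d :: real
  assumes "p^2 + q^2 = 1" "d^2 = A*q^2 + B*p^2" "d \<noteq> 0"
  shows "(A-B) * (((q*q + (-p)*p) * d - (p*q) * ((B-A)*p*q/d)) / (d*d)) = 1 * d + (-(A*B)) * (1/d^3)"
proof -
  have e1: "(A-B) * (((q*q + (-p)*p) * d - (p*q) * ((B-A)*p*q/d)) / (d*d))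
      = (A-B)*((q^2-p^2)*d^2 - (B-A)*p^2*q^2)/d^3"
    using assms(3) by (simp add: field_simps power2_eq_square power3_eq_cube)
  have e2: "1 * d + (-(A*B)) * (1/d^3) = (d^2*d^2 - A*B*(p^2+q^2)^2)/d^3"
    using assms(1,3) by (simp add: field_simps power2_eq_square power3_eq_cube)
  have e3: "(A-B)*((q^2-p^2)*(A*q^2+B*p^2) - (B-A)*p^2*q^2) = (A*q^2+B*p^2)*(A*q^2+B*p^2) - A*B*(p^2+q^2)^2"
    by (simp add: algebra_simps power2_eq_square)
  show ?thesis unfolding e1 e2 using e3 assms(2) by simp
qed

definition Gf :: "real \<Rightarrow> real \<Rightarrow> real" where
  "Gf A B = integral {0..pi/2} (\<lambda>t. ((sin t)^2 - (cos t)^2) / Dl A B t)"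

context
  fixes A B :: real
  assumes Apos: "A > 0" and Bpos: "B > 0"
begin

lemma NQ_rel:
  assumes "A \<noteq> B"
  shows "Nf A B = A * B * Qf A B"
proof -
  define h where "h t = sin t * cos t / Dl A B t" for t
  define h' where "h' t = ((cos t * cos t + (- sin t) * sin t) * Dl A B t - (sin t * cos t) * ((B - A) * sin t * cos t / Dl A B t))
         / (Dl A B t * Dl A B t)" for t
  have der: "(h has_real_derivative h' t) (at t)" for t
    unfolding h_def h'_def
    by (intro DERIV_divide DERIV_mult DERIV_sin DERIV_cos Dl_deriv[OF Apos Bpos] Dl_ne[OF Apos Bpos])
  have "(h' has_integral (h (pi/2) - h 0)) {0..pi/2}"
    by (rule fundamental_theorem_of_calculus)
       (auto intro!: has_field_derivative_at_within der simp: has_real_derivative_iff_has_vector_derivative[symmetric])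
  then have i0: "integral {0..pi/2} h' = 0" by (simp add: h_def integral_unique)
  have "(A - B) * integral {0..pi/2} h' = 1 * Nf A B + (-(A*B)) * Qf A B"
    unfolding Nf_def Qf_def
  proof (rule integral_combo[OF _ int_N[OF Apos Bpos] int_Q[OF Apos Bpos]])
    fix t :: real
    show "(A - B) * h' t = 1 * Dl A B t + - (A * B) * (1 / Dl A B t ^ 3)"
      unfolding h'_def
      by (rule alg_ibp) (auto simp: Dl_sq'[OF Apos Bpos] Dl_ne[OF Apos Bpos])
  qed
  then show ?thesis using i0 by simp
qed

lemma Wpos: "Wf A B > 0"
proof -
  have b: "1 / sqrt (A + B) \<le> 1 / Dl A B t" for t
  proof -
    have "A * (cos t)^2 + B * (sin t)^2 \<le> A + B"
    proof -
      have "A * (cos t)^2 \<le> A * 1" by (intro mult_left_mono) (use Apos in \<open>auto simp: abs_square_le_1\<close>)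
      moreover have "B * (sin t)^2 \<le> B * 1" by (intro mult_left_mono) (use Bpos in \<open>auto simp: abs_square_le_1\<close>)
      ultimately show ?thesis by simp
    qed
    then have "Dl A B t \<le> sqrt (A + B)" unfolding Dl_def by simp
    then show ?thesis using Dl_pos[OF Apos Bpos, of t] by (simp add: frac_le)
  qed
  have "integral {0..pi/2} (\<lambda>t. 1 / sqrt (A + B)) \<le> Wf A B"
    unfolding Wf_def by (rule integral_le) (auto intro: b int_W[OF Apos Bpos])
  moreover have "integral {0..pi/2} (\<lambda>t. 1 / sqrt (A + B)) > 0"
    using Apos Bpos by simp
  ultimately show ?thesis by linarith
qed

lemma C1_nonneg: "C1 A B \<ge> 0"
  unfolding C1_def
  by (rule integral_nonneg) (auto intro!: integrable_continuous_interval continuous_intros Dl_contU[OF Apos Bpos]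
      simp: Dl_ne[OF Apos Bpos] less_imp_le[OF Dl_pos[OF Apos Bpos]])

lemma G_rel: "(A - B) * Gf A B = (A + B) * Wf A B + (-2) * Nf A B"
  unfolding Gf_def Wf_def Nf_def
proof (rule integral_combo[OF _ int_W[OF Apos Bpos] int_N[OF Apos Bpos]])
  fix t :: real
  have d: "Dl A B t \<noteq> 0" by (rule Dl_ne[OF Apos Bpos])
  have "(A - B) * ((sin t)^2 - (cos t)^2) = (A + B) - 2 * (Dl A B t)^2"
    using Dl_sq_c[OF Apos Bpos, of t] Dl_sq_s[OF Apos Bpos, of t] by (simp add: algebra_simps)
  then have "(A - B) * (((sin t)^2 - (cos t)^2) / Dl A B t) = ((A + B) - 2 * (Dl A B t)^2) / Dl A B t"
    by (metis times_divide_eq_right)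
  then show "(A - B) * (((sin t)^2 - (cos t)^2) / Dl A B t) = (A + B) * (1 / Dl A B t) + (-2) * Dl A B t"
    using d by (simp add: field_simps power2_eq_square)
qed

end

lemma cos_pmt: "cos (pi/2 - t) = sin (t::real)" using sin_cos_eq[of t] by simp
lemma sin_pmt: "sin (pi/2 - t) = cos (t::real)" using cos_sin_eq[of t] by simp

lemma Dl_swap: "Dl A B (pi/2 - t) = Dl B A t"
  unfolding Dl_def by (simp add: cos_pmt sin_pmt add.commute)

lemma G_nonneg:
  assumes Apos: "A > 0" and Bpos: "B > 0" and AB: "B \<le> A"
  shows "Gf A B \<ge> 0"
proof -
  define g where "g = (\<lambda>t. ((sin t)^2 - (cos t)^2) / Dl A B t)"
  have ig: "g integrable_on {0..pi/2}" unfolding g_def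
    by (intro integrable_continuous_interval continuous_intros Dl_contU[OF Apos Bpos]) (simp add: Dl_ne[OF Apos Bpos])
  have GG: "Gf A B = integral {0..pi/2} g" by (simp add: Gf_def g_def)
  have r: "((\<lambda>t. g (pi/2 - t)) has_integral Gf A B) {0..pi/2}"
    unfolding GG by (rule refl_int) (use ig in auto)
  have gr: "g (pi/2 - t) = ((cos t)^2 - (sin t)^2) / Dl B A t" for t
    unfolding g_def Dl_swap by (simp add: cos_pmt sin_pmt)
  have "((\<lambda>t. g t + g (pi/2 - t)) has_integral (Gf A B + Gf A B)) {0..pi/2}"
    by (rule has_integral_add) (use ig r in \<open>auto simp: GG\<close>)
  moreover have "g t + g (pi/2 - t) \<ge> 0" for t
  proof -
    have p1: "Dl A B t > 0" by (rule Dl_pos[OF Apos Bpos])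
    have p2: "Dl B A t > 0" by (rule Dl_pos[OF Bpos Apos])
    have sq: "(Dl B A t)^2 - (Dl A B t)^2 = (A - B) * ((sin t)^2 - (cos t)^2)"
      using Dl_sq[OF Apos Bpos, of t] Dl_sq[OF Bpos Apos, of t] by (simp add: algebra_simps)
    have eq: "g t + g (pi/2 - t) = ((sin t)^2 - (cos t)^2) * (Dl B A t - Dl A B t) / (Dl A B t * Dl B A t)"
    proof -
      have gt: "g t = ((sin t)^2 - (cos t)^2) / Dl A B t" by (simp add: g_def)
      show ?thesis unfolding gr gt using p1 p2 by (simp add: field_simps)
    qed
    have "((sin t)^2 - (cos t)^2) * (Dl B A t - Dl A B t) \<ge> 0"
    proof (cases "(sin t)^2 - (cos t)^2 \<ge> 0")
      case True
      then have "(A - B) * ((sin t)^2 - (cos t)^2) \<ge> 0" by (rule mult_nonneg_nonneg[rotated]) (use AB in simp)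
      then have "(Dl B A t)^2 \<ge> (Dl A B t)^2" using sq by linarith
      then have "Dl B A t \<ge> Dl A B t" by (rule power2_le_imp_le) (use p2 in simp)
      then show ?thesis using True by simp
    next
      case False
      then have "(A - B) * ((sin t)^2 - (cos t)^2) \<le> 0" by (intro mult_nonneg_nonpos) (use AB in simp_all)
      then have "(Dl B A t)^2 \<le> (Dl A B t)^2" using sq by linarith
      then have "Dl B A t \<le> Dl A B t" by (rule power2_le_imp_le) (use p1 in simp)
      then show ?thesis using False by (simp add: mult_nonpos_nonpos)
    qed
    then show ?thesis unfolding eq using p1 p2 by simp
  qed
  ultimately have "Gf A B + Gf A B \<ge> 0" by (rule has_integral_nonneg)
  then show ?thesis by simp
qed


lemma Dl_param_deriv:
  fixes Af Bf :: "real \<Rightarrow> real"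
  assumes "(Af has_real_derivative a') (at z)" "(Bf has_real_derivative b') (at z)"
    "Af z > 0" "Bf z > 0"
  shows "((\<lambda>z. Dl (Af z) (Bf z) t) has_real_derivative
           (a' * (cos t)^2 + b' * (sin t)^2) / (2 * Dl (Af z) (Bf z) t)) (at z)"
proof -
  have p: "Af z * (cos t)^2 + Bf z * (sin t)^2 > 0" using Dl_arg_pos assms(3,4) .
  have g: "((\<lambda>z. Af z * (cos t)^2 + Bf z * (sin t)^2) has_real_derivative (a' * (cos t)^2 + b' * (sin t)^2)) (at z)"
    using assms(1,2) by (auto intro!: derivative_eq_intros)
  have "((\<lambda>z. sqrt (Af z * (cos t)^2 + Bf z * (sin t)^2)) has_real_derivative
      inverse (sqrt (Af z * (cos t)^2 + Bf z * (sin t)^2)) / 2 * (a' * (cos t)^2 + b' * (sin t)^2)) (at z)"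
    by (rule DERIV_chain2[OF DERIV_real_sqrt[OF p] g])
  then show ?thesis unfolding Dl_def by (simp add: field_simps)
qed

lemma W_param_deriv:
  fixes Af Bf :: "real \<Rightarrow> real"
  assumes "(Af has_real_derivative a') (at z)" "(Bf has_real_derivative b') (at z)"
    "Af z > 0" "Bf z > 0"
  shows "((\<lambda>z. 1 / Dl (Af z) (Bf z) t) has_real_derivative
           - (a' * (cos t)^2 + b' * (sin t)^2) / (2 * (Dl (Af z) (Bf z) t)^3)) (at z)"
proof -
  have ne: "Dl (Af z) (Bf z) t \<noteq> 0" using Dl_ne[OF assms(3,4)] .
  have "((\<lambda>z. 1 / Dl (Af z) (Bf z) t) has_real_derivative
     (0 * Dl (Af z) (Bf z) t - 1 * ((a' * (cos t)^2 + b' * (sin t)^2) / (2 * Dl (Af z) (Bf z) t))) /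
       (Dl (Af z) (Bf z) t * Dl (Af z) (Bf z) t)) (at z)"
    by (rule DERIV_divide[OF DERIV_const Dl_param_deriv[OF assms] ne])
  moreover have "(0 * Dl (Af z) (Bf z) t - 1 * ((a' * (cos t)^2 + b' * (sin t)^2) / (2 * Dl (Af z) (Bf z) t))) /
       (Dl (Af z) (Bf z) t * Dl (Af z) (Bf z) t) = - (a' * (cos t)^2 + b' * (sin t)^2) / (2 * (Dl (Af z) (Bf z) t)^3)"
    using ne by (simp add: field_simps power3_eq_cube)
  ultimately show ?thesis by simp
qed

lemma cont_comp_fst:
  assumes "continuous_on U f"
  shows "continuous_on (U \<times> T) (\<lambda>x. f (fst x))"
  by (rule continuous_on_compose2[OF assms continuous_on_fst]) auto

lemma W_chain:
  fixes Af Bf Af' Bf' :: "real \<Rightarrow> real" and U :: "real set"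
  assumes U: "open U" "convex U" "z0 \<in> U"
    and dA: "\<And>z. z \<in> U \<Longrightarrow> (Af has_real_derivative Af' z) (at z)"
    and dB: "\<And>z. z \<in> U \<Longrightarrow> (Bf has_real_derivative Bf' z) (at z)"
    and cA': "continuous_on U Af'" and cB': "continuous_on U Bf'"
    and pA: "\<And>z. z \<in> U \<Longrightarrow> Af z > 0" and pB: "\<And>z. z \<in> U \<Longrightarrow> Bf z > 0"
  shows "((\<lambda>z. Wf (Af z) (Bf z)) has_real_derivative
           - (Af' z0 * C3 (Af z0) (Bf z0) + Bf' z0 * S3 (Af z0) (Bf z0)) / 2) (at z0)"
proof -
  have cA: "continuous_on U Af"
    by (rule continuous_at_imp_continuous_on) (use dA DERIV_isCont in blast)
  have cB: "continuous_on U Bf"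
    by (rule continuous_at_imp_continuous_on) (use dB DERIV_isCont in blast)
  define fx where "fx z t = - (Af' z * (cos t)^2 + Bf' z * (sin t)^2) / (2 * (Dl (Af z) (Bf z) t)^3)" for z t
  have "((\<lambda>z. integral (cbox 0 (pi/2)) (\<lambda>t. 1 / Dl (Af z) (Bf z) t)) has_field_derivative
          integral (cbox 0 (pi/2)) (fx z0)) (at z0 within U)"
  proof (rule leibniz_rule_field_derivative)
    fix z t assume "z \<in> U" "t \<in> cbox 0 (pi/2)"
    show "((\<lambda>z. 1 / Dl (Af z) (Bf z) t) has_field_derivative fx z t) (at z within U)"
      unfolding fx_def
      by (rule has_field_derivative_at_within, rule W_param_deriv) (use \<open>z \<in> U\<close> dA dB pA pB in auto)
  next
    fix z assume "z \<in> U"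
    show "(\<lambda>t. 1 / Dl (Af z) (Bf z) t) integrable_on cbox 0 (pi/2)"
      using int_W[OF pA pB, OF \<open>z \<in> U\<close> \<open>z \<in> U\<close>] by simp
  next
    have pos: "\<And>z t. z \<in> U \<Longrightarrow> Af z * (cos t)^2 + Bf z * (sin t)^2 > 0"
      using pA pB Dl_arg_pos by blast
    have pos_ne: "\<And>z t. z \<in> U \<Longrightarrow> Af z * (cos t)^2 + Bf z * (sin t)^2 \<noteq> 0"
      using pos by (metis less_irrefl)
    have "continuous_on (U \<times> cbox 0 (pi/2)) (\<lambda>x. fx (fst x) (snd x))"
      unfolding fx_def Dl_def
      apply (intro continuous_intros cont_comp_fst[OF cA] cont_comp_fst[OF cB] cont_comp_fst[OF cA'] cont_comp_fst[OF cB'])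
      using pos by (auto simp: less_imp_le pos_ne)
    then show "continuous_on (U \<times> cbox 0 (pi/2)) (\<lambda>(z, t). fx z t)"
      by (simp add: case_prod_beta')
  qed (use U in auto)
  moreover have "integral (cbox 0 (pi/2)) (fx z0) = - (Af' z0 * C3 (Af z0) (Bf z0) + Bf' z0 * S3 (Af z0) (Bf z0)) / 2"
  proof -
    have i1: "(\<lambda>t. (cos t)^2 / (Dl (Af z0) (Bf z0) t)^3) integrable_on {0..pi/2}"
      by (intro integrable_continuous_interval continuous_intros Dl_contU[OF pA pB, OF U(3) U(3)])
         (simp add: Dl_ne[OF pA pB, OF U(3) U(3)])
    have i2: "(\<lambda>t. (sin t)^2 / (Dl (Af z0) (Bf z0) t)^3) integrable_on {0..pi/2}"
      by (intro integrable_continuous_interval continuous_intros Dl_contU[OF pA pB, OF U(3) U(3)])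
         (simp add: Dl_ne[OF pA pB, OF U(3) U(3)])
    have "2 * integral {0..pi/2} (fx z0) = (- Af' z0) * C3 (Af z0) (Bf z0) + (- Bf' z0) * S3 (Af z0) (Bf z0)"
      unfolding C3_def S3_def
      by (rule integral_combo[OF _ i1 i2]) (use Dl_ne[OF pA pB, OF U(3) U(3)] in \<open>simp add: fx_def field_simps\<close>)
    then show ?thesis by simp
  qed
  ultimately show ?thesis
    using at_within_open[OF U(3,1)] unfolding Wf_def by (metis box_real(2))
qed

lemma N_chain:
  fixes Af Bf Af' Bf' :: "real \<Rightarrow> real" and U :: "real set"
  assumes U: "open U" "convex U" "z0 \<in> U"
    and dA: "\<And>z. z \<in> U \<Longrightarrow> (Af has_real_derivative Af' z) (at z)"
    and dB: "\<And>z. z \<in> U \<Longrightarrow> (Bf has_real_derivative Bf' z) (at z)"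
    and cA': "continuous_on U Af'" and cB': "continuous_on U Bf'"
    and pA: "\<And>z. z \<in> U \<Longrightarrow> Af z > 0" and pB: "\<And>z. z \<in> U \<Longrightarrow> Bf z > 0"
  shows "((\<lambda>z. Nf (Af z) (Bf z)) has_real_derivative
           (Af' z0 * C1 (Af z0) (Bf z0) + Bf' z0 * S1 (Af z0) (Bf z0)) / 2) (at z0)"
proof -
  have cA: "continuous_on U Af"
    by (rule continuous_at_imp_continuous_on) (use dA DERIV_isCont in blast)
  have cB: "continuous_on U Bf"
    by (rule continuous_at_imp_continuous_on) (use dB DERIV_isCont in blast)
  define fx where "fx z t = (Af' z * (cos t)^2 + Bf' z * (sin t)^2) / (2 * Dl (Af z) (Bf z) t)" for z t
  have "((\<lambda>z. integral (cbox 0 (pi/2)) (\<lambda>t. Dl (Af z) (Bf z) t)) has_field_derivative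
          integral (cbox 0 (pi/2)) (fx z0)) (at z0 within U)"
  proof (rule leibniz_rule_field_derivative)
    fix z t assume "z \<in> U" "t \<in> cbox 0 (pi/2)"
    show "((\<lambda>z. Dl (Af z) (Bf z) t) has_field_derivative fx z t) (at z within U)"
      unfolding fx_def
      by (rule has_field_derivative_at_within, rule Dl_param_deriv) (use \<open>z \<in> U\<close> dA dB pA pB in auto)
  next
    fix z assume "z \<in> U"
    show "(\<lambda>t. Dl (Af z) (Bf z) t) integrable_on cbox 0 (pi/2)"
      using int_N[OF pA pB, OF \<open>z \<in> U\<close> \<open>z \<in> U\<close>] by simp
  next
    have pos: "\<And>z t. z \<in> U \<Longrightarrow> Af z * (cos t)^2 + Bf z * (sin t)^2 > 0"
      using pA pB Dl_arg_pos by blast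
    have pos_ne: "\<And>z t. z \<in> U \<Longrightarrow> Af z * (cos t)^2 + Bf z * (sin t)^2 \<noteq> 0"
      using pos by (metis less_irrefl)
    have "continuous_on (U \<times> cbox 0 (pi/2)) (\<lambda>x. fx (fst x) (snd x))"
      unfolding fx_def Dl_def
      apply (intro continuous_intros cont_comp_fst[OF cA] cont_comp_fst[OF cB] cont_comp_fst[OF cA'] cont_comp_fst[OF cB'])
      using pos by (auto simp: less_imp_le pos_ne)
    then show "continuous_on (U \<times> cbox 0 (pi/2)) (\<lambda>(z, t). fx z t)"
      by (simp add: case_prod_beta')
  qed (use U in auto)
  moreover have "integral (cbox 0 (pi/2)) (fx z0) = (Af' z0 * C1 (Af z0) (Bf z0) + Bf' z0 * S1 (Af z0) (Bf z0)) / 2"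
  proof -
    have i1: "(\<lambda>t. (cos t)^2 / (Dl (Af z0) (Bf z0) t)) integrable_on {0..pi/2}"
      by (intro integrable_continuous_interval continuous_intros Dl_contU[OF pA pB, OF U(3) U(3)])
         (simp add: Dl_ne[OF pA pB, OF U(3) U(3)])
    have i2: "(\<lambda>t. (sin t)^2 / (Dl (Af z0) (Bf z0) t)) integrable_on {0..pi/2}"
      by (intro integrable_continuous_interval continuous_intros Dl_contU[OF pA pB, OF U(3) U(3)])
         (simp add: Dl_ne[OF pA pB, OF U(3) U(3)])
    have "2 * integral {0..pi/2} (fx z0) = (Af' z0) * C1 (Af z0) (Bf z0) + (Bf' z0) * S1 (Af z0) (Bf z0)"
      unfolding C1_def S1_def
      by (rule integral_combo[OF _ i1 i2]) (use Dl_ne[OF pA pB, OF U(3) U(3)] in \<open>simp add: fx_def field_simps\<close>)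
    then show ?thesis by simp
  qed
  ultimately show ?thesis
    using at_within_open[OF U(3,1)] unfolding Nf_def by (metis box_real(2))
qed


lemma EV_id:
  fixes J E a b c r :: real
  assumes v1: "a+b+c = 2" and v2: "a*b+b*c+c*a = 4*E" and v3: "a*b*c = 2*J^2" and r: "r \<noteq> 0"
  shows "E - VJ J r = (r^2 - a)*(b - r^2)*(c - r^2)/(4*r^2)"
proof -
  have "E - VJ J r = (4*E*r^2 - 2*J^2 - 2*r^2*r^2 + r^2*r^2*r^2)/(4*r^2)"
    unfolding VJ_def using r by (simp add: field_simps power2_eq_square power4_eq_xxxx)
  also have "4*E*r^2 - 2*J^2 - 2*r^2*r^2 + r^2*r^2*r^2
     = r^2*r^2*r^2 - (a+b+c)*r^2*r^2 + (a*b+b*c+c*a)*r^2 - a*b*c"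
    using v1 v2 v3 by simp
  also have "\<dots> = (r^2 - a)*(b - r^2)*(c - r^2)" by (simp add: algebra_simps)
  finally show ?thesis .
qed

locale roots3 =
  fixes J E a b c :: real
  assumes apos: "0 < a" and ab: "a < b" and bc: "b < c"
    and v1: "a+b+c = 2" and v2: "a*b+b*c+c*a = 4*E" and v3: "a*b*c = 2*J^2"
begin

lemma bpos: "0 < b" using apos ab by simp
lemma cpos: "0 < c" using apos ab bc by simp

lemma EV: "r \<noteq> 0 \<Longrightarrow> E - VJ J r = (r^2 - a)*(b - r^2)*(c - r^2)/(4*r^2)"
  using EV_id[OF v1 v2 v3] by blast

lemma root_set: "{r. 0 < r \<and> VJ J r = E} = {sqrt a, sqrt b, sqrt c}"
proof (intro set_eqI iffI)
  fix r assume "r \<in> {r. 0 < r \<and> VJ J r = E}"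
  then have r: "0 < r" "VJ J r = E" by auto
  then have "(r^2 - a)*(b - r^2)*(c - r^2)/(4*r^2) = 0" using EV[of r] by simp
  then have "r^2 = a \<or> r^2 = b \<or> r^2 = c" using r(1) by auto
  then show "r \<in> {sqrt a, sqrt b, sqrt c}" using r(1) by auto
next
  fix r assume "r \<in> {sqrt a, sqrt b, sqrt c}"
  then have r2: "r^2 = a \<or> r^2 = b \<or> r^2 = c" and r0: "0 < r"
    using apos bpos cpos by auto
  have "E - VJ J r = 0" using EV[of r] r0 r2 by auto
  then show "r \<in> {r. 0 < r \<and> VJ J r = E}" using r0 by simp
qed

lemma roots_eq: "roots J E = [sqrt a, sqrt b, sqrt c]"
proof -
  have s1: "sqrt a < sqrt b" "sqrt b < sqrt c" using ab bc by auto
  have "sorted_list_of_set {sqrt a, sqrt b, sqrt c} = [sqrt a, sqrt b, sqrt c]"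
    using s1 by (simp add: sorted_list_of_set_insert_remove)
  then show ?thesis unfolding roots_def root_set .
qed

lemma r1_eq: "r1 J E = sqrt a" unfolding r1_def roots_eq by simp
lemma r2_eq: "r2 J E = sqrt b" unfolding r2_def roots_eq by simp

end


context roots3
begin

definition hh :: "real \<Rightarrow> real \<Rightarrow> real \<Rightarrow> real" where
  "hh \<alpha> \<beta> \<phi> = sqrt 2 * (\<alpha> * (c - (Dl (c-a) (c-b) \<phi>)^2) + \<beta>) / Dl (c-a) (c-b) \<phi>"

lemma ApB: "c - a > 0" "c - b > 0" using ab bc by auto

lemma hh_cont: "continuous_on S (hh \<alpha> \<beta>)"
  unfolding hh_def
  by (intro continuous_intros Dl_contU[OF ApB]) (simp add: Dl_ne[OF ApB])

lemma key_alg: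
  assumes r: "sqrt a < r" "r < sqrt b"
  shows "hh \<alpha> \<beta> (arcsin (sqrt ((r^2 - a)/(b - a)))) *
      (inverse (sqrt (1 - (sqrt ((r^2 - a)/(b - a)))^2)) * (inverse (sqrt ((r^2 - a)/(b - a))) / 2 * (2 * r / (b - a))))
      = (\<alpha> * r^2 + \<beta>) / sqrt (2 * (E - VJ J r))"
proof -
  define t where "t = (r^2 - a)/(b - a)"
  have r0: "r > 0" using r apos by (meson less_trans real_sqrt_gt_zero)
  have ra: "r^2 > a" using r(1) r0 by (metis apos less_imp_le real_sqrt_less_iff real_sqrt_pow2 real_sqrt_power)
  have rb: "r^2 < b" using r(2) r0 by (metis bpos less_imp_le real_sqrt_less_iff real_sqrt_pow2 real_sqrt_power)
  have t0: "0 < t" "t < 1" unfolding t_def using ra rb ab by (auto simp: field_simps)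
  have st: "sqrt t ^ 2 = t" using t0 by simp
  have s01: "0 \<le> sqrt t" "sqrt t \<le> 1" using t0 by auto
  have sinv: "sin (arcsin (sqrt t)) = sqrt t" by (rule sin_arcsin) (use s01 in linarith)+
  have cosv0: "cos (arcsin (sqrt t)) = sqrt (1 - (sqrt t)^2)" by (rule cos_arcsin) (use s01 in linarith)+
  have cosv: "cos (arcsin (sqrt t)) = sqrt (1 - t)" using cosv0 st by simp
  have Dlv: "Dl (c-a) (c-b) (arcsin (sqrt t)) = sqrt (c - r^2)"
  proof -
    have "(c-a) * (sqrt (1 - t))^2 + (c-b) * (sqrt t)^2 = (c-a) * (1 - t) + (c - b) * t" using t0 by simp
    also have "\<dots> = c - r^2"
    proof -
      have "(b - a) * t = r^2 - a" unfolding t_def using ab by simp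
      moreover have "(c-a) * (1 - t) + (c - b) * t = (c - a) - (b - a) * t" by (simp add: algebra_simps)
      ultimately show ?thesis by simp
    qed
    finally show ?thesis unfolding Dl_def sinv cosv by simp
  qed
  have cr: "c - r^2 > 0" using rb bc by simp
  define P where "P = (r^2 - a)*(b - r^2)*(c - r^2)"
  have P0: "P > 0" unfolding P_def using ra rb cr by simp
  have k1: "(b - a) * (sqrt t * sqrt (1 - t) * sqrt (c - r^2)) = sqrt P"
  proof -
    have "((b - a) * (sqrt t * sqrt (1 - t) * sqrt (c - r^2)))^2 = (b-a)^2 * t * (1 - t) * (c - r^2)"
      using t0 cr by (simp add: power_mult_distrib)
    also have "\<dots> = ((b - a) * t) * ((b - a) * (1 - t)) * (c - r^2)" by (simp add: power2_eq_square algebra_simps)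
    also have "(b - a) * t = r^2 - a" unfolding t_def using ab by simp
    also have "(b - a) * (1 - t) = b - r^2"
    proof -
      have "(b - a) * (1 - t) = (b - a) - (b - a) * t" by (simp add: algebra_simps)
      moreover have "(b - a) * t = r^2 - a" unfolding t_def using ab by simp
      ultimately show ?thesis by simp
    qed
    also have "(r^2 - a) * (b - r^2) * (c - r^2) = P" unfolding P_def ..
    finally have "((b - a) * (sqrt t * sqrt (1 - t) * sqrt (c - r^2)))^2 = P" .
    moreover have "(b - a) * (sqrt t * sqrt (1 - t) * sqrt (c - r^2)) \<ge> 0" using t0 cr ab by simp
    ultimately show ?thesis by (metis real_sqrt_unique)
  qed
  have k2: "sqrt (2 * (E - VJ J r)) = sqrt P / (sqrt 2 * r)"
  proof -
    have "E - VJ J r = P / (4 * r^2)" unfolding P_def using EV[of r] r0 by simp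
    moreover have "(sqrt P / (sqrt 2 * r))^2 = 2 * (P / (4 * r^2))"
      using P0 r0 by (simp add: power_divide power_mult_distrib)
    moreover have "sqrt P / (sqrt 2 * r) \<ge> 0" using P0 r0 by simp
    ultimately show ?thesis by (metis real_sqrt_unique)
  qed
  have lhs: "hh \<alpha> \<beta> (arcsin (sqrt t)) * (inverse (sqrt (1 - (sqrt t)^2)) * (inverse (sqrt t) / 2 * (2 * r / (b - a))))
      = sqrt 2 * (\<alpha> * r^2 + \<beta>) * r / ((b - a) * (sqrt t * sqrt (1 - t) * sqrt (c - r^2)))"
    unfolding hh_def Dlv st using cr t0 ab by (simp add: field_simps)
  show ?thesis
    unfolding t_def[symmetric] lhs k1 k2 using P0 r0 by (simp add: field_simps)
qed

lemma int_repr: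
  "((\<lambda>r. (\<alpha> * r^2 + \<beta>) / sqrt (2 * (E - VJ J r))) has_integral integral {0..pi/2} (hh \<alpha> \<beta>)) {sqrt a..sqrt b}"
proof -
  define \<psi> where "\<psi> r = arcsin (sqrt ((r^2 - a)/(b - a)))" for r
  define H where "H x = integral {0..x} (hh \<alpha> \<beta>)" for x
  have sab: "sqrt a < sqrt b" using ab by simp
  have psi_cont: "continuous_on {sqrt a..sqrt b} \<psi>"
  proof -
    have "\<forall>r\<in>{sqrt a..sqrt b}. - 1 \<le> sqrt ((r^2 - a)/(b - a)) \<and> sqrt ((r^2 - a)/(b - a)) \<le> 1"
    proof
      fix r assume r: "r \<in> {sqrt a..sqrt b}"
      then have r0: "r \<ge> 0" using apos by (meson atLeastAtMost_iff order_trans real_sqrt_ge_zero less_imp_le)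
      have "r^2 \<ge> a" using r r0 apos by (metis atLeastAtMost_iff less_imp_le real_sqrt_le_iff real_sqrt_pow2 real_sqrt_power)
      moreover have "r^2 \<le> b" using r r0 bpos by (metis atLeastAtMost_iff less_imp_le real_sqrt_le_iff real_sqrt_pow2 real_sqrt_power)
      ultimately have "0 \<le> (r^2 - a)/(b - a)" "(r^2 - a)/(b - a) \<le> 1" using ab by (auto simp: field_simps)
      then have "0 \<le> sqrt ((r^2 - a)/(b - a))" "sqrt ((r^2 - a)/(b - a)) \<le> 1" by auto
      then show "- 1 \<le> sqrt ((r^2 - a)/(b - a)) \<and> sqrt ((r^2 - a)/(b - a)) \<le> 1" by linarith
    qed
    then show ?thesis unfolding \<psi>_def by (intro continuous_intros) (use ab in auto)
  qed
  have psi_range: "\<psi> ` {sqrt a..sqrt b} \<subseteq> {0..pi/2}"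
  proof
    fix y assume "y \<in> \<psi> ` {sqrt a..sqrt b}"
    then obtain r where r: "r \<in> {sqrt a..sqrt b}" and y: "y = \<psi> r" by auto
    then have r0: "r \<ge> 0" using apos by (meson atLeastAtMost_iff order_trans real_sqrt_ge_zero less_imp_le)
    have "r^2 \<ge> a" using r r0 apos by (metis atLeastAtMost_iff less_imp_le real_sqrt_le_iff real_sqrt_pow2 real_sqrt_power)
    moreover have "r^2 \<le> b" using r r0 bpos by (metis atLeastAtMost_iff less_imp_le real_sqrt_le_iff real_sqrt_pow2 real_sqrt_power)
    ultimately have q: "0 \<le> (r^2 - a)/(b - a)" "(r^2 - a)/(b - a) \<le> 1" using ab by (auto simp: field_simps)
    then have q1: "0 \<le> sqrt ((r^2 - a)/(b - a))" "sqrt ((r^2 - a)/(b - a)) \<le> 1" by auto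
    have "arcsin 0 \<le> arcsin (sqrt ((r^2 - a)/(b - a)))"
      by (subst arcsin_le_mono) (use q1 in auto)
    moreover have "arcsin (sqrt ((r^2 - a)/(b - a))) \<le> arcsin 1"
      by (subst arcsin_le_mono) (use q1 in auto)
    ultimately show "y \<in> {0..pi/2}" unfolding y \<psi>_def by simp
  qed
  have H_cont: "continuous_on {0..pi/2} H"
    unfolding H_def by (rule indefinite_integral_continuous_1) (intro integrable_continuous_interval hh_cont)
  have F_cont: "continuous_on {sqrt a..sqrt b} (\<lambda>r. H (\<psi> r))"
    by (rule continuous_on_compose2[OF H_cont psi_cont psi_range])
  have F_der: "((\<lambda>r. H (\<psi> r)) has_real_derivative (\<alpha> * r^2 + \<beta>) / sqrt (2 * (E - VJ J r))) (at r)"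
    if r: "r \<in> {sqrt a<..<sqrt b}" for r
  proof -
    define t where "t = (r^2 - a)/(b - a)"
    have r0: "r > 0" using r apos by (meson greaterThanLessThan_iff less_trans real_sqrt_gt_zero)
    have ra: "r^2 > a" using r r0 by (metis apos greaterThanLessThan_iff less_imp_le real_sqrt_less_iff real_sqrt_pow2 real_sqrt_power)
    have rb: "r^2 < b" using r r0 by (metis bpos greaterThanLessThan_iff less_imp_le real_sqrt_less_iff real_sqrt_pow2 real_sqrt_power)
    have t0: "0 < t" "t < 1" unfolding t_def using ra rb ab by (auto simp: field_simps)
    have dt: "((\<lambda>r. (r^2 - a)/(b - a)) has_real_derivative (2 * r / (b - a))) (at r)"
      using ab by (auto intro!: derivative_eq_intros)
    have dsq: "((\<lambda>r. sqrt ((r^2 - a)/(b - a))) has_real_derivative inverse (sqrt t) / 2 * (2 * r / (b - a))) (at r)"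
      unfolding t_def by (rule DERIV_chain2[OF DERIV_real_sqrt dt]) (use t0 in \<open>simp add: t_def\<close>)
    have dpsi: "(\<psi> has_real_derivative inverse (sqrt (1 - (sqrt t)^2)) * (inverse (sqrt t) / 2 * (2 * r / (b - a)))) (at r)"
      unfolding \<psi>_def[abs_def] t_def by (rule DERIV_chain2[OF DERIV_arcsin dsq[unfolded t_def]]) (use t0 in \<open>auto simp: t_def intro: less_le_trans[OF _ real_sqrt_ge_zero]\<close>)
    have psir: "0 < \<psi> r" "\<psi> r < pi/2"
    proof -
      have q1: "0 < sqrt t" "sqrt t < 1" using t0 by auto
      have "arcsin 0 < arcsin (sqrt t)" by (subst arcsin_less_mono) (use q1 in auto)
      moreover have "arcsin (sqrt t) < arcsin 1" by (subst arcsin_less_mono) (use q1 in auto)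
      ultimately have "0 < arcsin (sqrt t)" "arcsin (sqrt t) < pi/2" by auto
      then show "0 < \<psi> r" "\<psi> r < pi/2" unfolding \<psi>_def t_def[symmetric] by auto
    qed
    have dH: "(H has_real_derivative hh \<alpha> \<beta> (\<psi> r)) (at (\<psi> r))"
    proof -
      have "(H has_real_derivative hh \<alpha> \<beta> (\<psi> r)) (at (\<psi> r) within {0..pi/2})"
        unfolding H_def[abs_def] by (rule integral_has_real_derivative[OF hh_cont]) (use psir in auto)
      then show ?thesis using at_within_Icc_at[OF psir] by simp
    qed
    have "((\<lambda>r. H (\<psi> r)) has_real_derivative hh \<alpha> \<beta> (\<psi> r) * (inverse (sqrt (1 - (sqrt t)^2)) * (inverse (sqrt t) / 2 * (2 * r / (b - a))))) (at r)"
      by (rule DERIV_chain2[OF dH dpsi])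
    moreover have "hh \<alpha> \<beta> (\<psi> r) * (inverse (sqrt (1 - (sqrt t)^2)) * (inverse (sqrt t) / 2 * (2 * r / (b - a))))
       = (\<alpha> * r^2 + \<beta>) / sqrt (2 * (E - VJ J r))"
      unfolding \<psi>_def t_def by (rule key_alg) (use r in auto)
    ultimately show ?thesis by simp
  qed
  have "((\<lambda>r. (\<alpha> * r^2 + \<beta>) / sqrt (2 * (E - VJ J r))) has_integral (H (\<psi> (sqrt b)) - H (\<psi> (sqrt a)))) {sqrt a..sqrt b}"
    by (rule fundamental_theorem_of_calculus_interior[OF less_imp_le[OF sab] F_cont])
       (use F_der in \<open>auto simp: has_real_derivative_iff_has_vector_derivative[symmetric]\<close>)
  moreover have "\<psi> (sqrt b) = pi/2" "\<psi> (sqrt a) = 0" unfolding \<psi>_def using apos ab by auto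
  ultimately show ?thesis by (simp add: H_def)
qed

lemma Tper_eq: "Tper J E = 2 * sqrt 2 * Wf (c-a) (c-b)"
proof -
  have "integral {sqrt a..sqrt b} (\<lambda>r. 1 / sqrt (2 * (E - VJ J r))) = integral {0..pi/2} (hh 0 1)"
    using int_repr[of 0 1] by (simp add: integral_unique)
  also have "integral {0..pi/2} (hh 0 1) = sqrt 2 * Wf (c-a) (c-b)"
  proof -
    have hh01: "hh 0 1 = (\<lambda>\<phi>. sqrt 2 * (1 / Dl (c-a) (c-b) \<phi>))" by (simp add: fun_eq_iff hh_def)
    show ?thesis unfolding Wf_def hh01 by (rule integral_mult_right)
  qed
  finally show ?thesis unfolding Tper_def r1_eq r2_eq by simp
qed

lemma Mt_eq: "Mt J E = sqrt 2 * (c * Wf (c-a) (c-b) - Nf (c-a) (c-b))"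
proof -
  have "integral {sqrt a..sqrt b} (\<lambda>r. r^2 / sqrt (2 * (E - VJ J r))) = integral {0..pi/2} (hh 1 0)"
    using int_repr[of 1 0] by (simp add: integral_unique)
  also have "integral {0..pi/2} (hh 1 0) = sqrt 2 * c * Wf (c-a) (c-b) + (- sqrt 2) * Nf (c-a) (c-b)"
    unfolding Wf_def Nf_def
    by (rule integral_combo[where m=1, simplified, OF _ int_W[OF ApB] int_N[OF ApB]])
       (use Dl_ne[OF ApB] in \<open>simp add: hh_def field_simps power2_eq_square\<close>)
  finally show ?thesis unfolding Mt_def r1_eq r2_eq by (simp add: algebra_simps)
qed

end


definition fq :: "real \<Rightarrow> real" where "fq x = x * (1 - x^2)"

lemma fq_inc:
  assumes "0 \<le> x" "x < y" "3 * y^2 \<le> 1"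
  shows "fq x < fq y"
proof -
  have y0: "y > 0" using assms by simp
  have h1: "x^2 < y^2" using assms by (simp add: power_strict_mono)
  have h2: "x * y < y^2" unfolding power2_eq_square using assms y0 by (intro mult_strict_right_mono) auto
  have s: "x^2 + x*y + y^2 < 1" using h1 h2 assms(3) by linarith
  have "fq y - fq x = (y - x) * (1 - (x^2 + x*y + y^2))" unfolding fq_def by (simp add: algebra_simps power2_eq_square power3_eq_cube)
  moreover have "(y - x) * (1 - (x^2 + x*y + y^2)) > 0" using assms s by simp
  ultimately show ?thesis by simp
qed

lemma fq_dec:
  assumes "1 \<le> 3 * x^2" "x < y" "0 \<le> x"
  shows "fq y < fq x"
proof -
  have x0: "x > 0" using assms by (cases "x = 0") auto
  have h1: "x^2 < y^2" using assms by (simp add: power_strict_mono)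
  have h2: "x^2 < x * y" unfolding power2_eq_square using assms x0 by (intro mult_strict_left_mono) auto
  have s: "x^2 + x*y + y^2 > 1" using h1 h2 assms(1) by linarith
  have "fq y - fq x = (y - x) * (1 - (x^2 + x*y + y^2))" unfolding fq_def by (simp add: algebra_simps power2_eq_square power3_eq_cube)
  moreover have "(y - x) * (1 - (x^2 + x*y + y^2)) < 0" using assms s by (simp add: mult_pos_neg)
  ultimately show ?thesis by simp
qed

lemma fq_cont: "continuous_on S fq" unfolding fq_def by (intro continuous_intros)

lemma s3: "(1 / sqrt 3)^2 = (1/3::real)" by (simp add: power_divide)

lemma fq_s: "fq (1 / sqrt 3) = sqrt (4/27)"
proof -
  have "fq (1 / sqrt 3) = (1 / sqrt 3) * (2/3)" unfolding fq_def s3 by simp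
  moreover have "sqrt (4/27) = (1 / sqrt 3) * (2/3)"
  proof (rule real_sqrt_unique)
    show "((1 / sqrt 3) * (2/3))^2 = (4/27::real)" by (simp add: power_mult_distrib power_divide)
  qed simp
  ultimately show ?thesis by simp
qed

lemma q_exists:
  assumes "0 < J" "J < sqrt (4/27)"
  shows "qsmall J \<in> {0<..<1/sqrt 3} \<and> fq (qsmall J) = J"
proof -
  let ?s = "1 / sqrt 3 :: real"
  have s0: "0 < ?s" by simp
  have l1: "fq 0 \<le> J" using assms by (simp add: fq_def)
  have l2: "J \<le> fq ?s" using assms fq_s by simp
  obtain x where x: "0 \<le> x" "x \<le> ?s" "fq x = J"
    using IVT'[OF l1 l2 _ fq_cont] s0 by auto
  have x1: "x \<noteq> 0" using x assms unfolding fq_def by auto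
  have x2: "x \<noteq> ?s" using x assms fq_s by auto
  have xs: "0 < x" "x < ?s" using x x1 x2 by auto
  have uniq: "y = x" if "0 < y" "y < ?s" "J = y * (1 - y^2)" for y
  proof (rule ccontr)
    assume "y \<noteq> x"
    then consider "y < x" | "x < y" by linarith
    then show False
    proof cases
      case 1
      have "x^2 \<le> ?s^2" by (rule power_mono) (use xs in auto)
      then have "3 * x^2 \<le> 1" using s3 by simp
      then have "fq y < fq x" using 1 that by (intro fq_inc) auto
      then show False using that x by (simp add: fq_def)
    next
      case 2
      have "y^2 \<le> ?s^2" by (rule power_mono) (use that in auto)
      then have "3 * y^2 \<le> 1" using s3 by simp
      then have "fq x < fq y" using 2 xs by (intro fq_inc) auto
      then show False using that x by (simp add: fq_def)
    qed
  qed
  have xJ: "J = x * (1 - x^2)" using x(3) unfolding fq_def by simp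
  have "qsmall J = x" unfolding qsmall_def
  proof (rule the_equality)
    show "0 < x \<and> x < ?s \<and> J = x * (1 - x^2)" using xs xJ by simp
    fix y assume "0 < y \<and> y < ?s \<and> J = y * (1 - y^2)"
    then show "y = x" using uniq by blast
  qed
  then show ?thesis using xs x by simp
qed


lemma Q_exists:
  assumes "0 < J" "J < sqrt (4/27)"
  shows "Qbig J \<in> {1/sqrt 3<..<1} \<and> fq (Qbig J) = J"
proof -
  let ?s = "1 / sqrt 3 :: real"
  have s0: "0 < ?s" by simp
  have s1: "?s < 1" by simp
  have l1: "fq 1 \<le> J" using assms by (simp add: fq_def)
  have l2: "J \<le> fq ?s" using assms fq_s by simp
  obtain x where x: "?s \<le> x" "x \<le> 1" "fq x = J"
    using IVT2'[OF l1 l2 _ fq_cont] s1 by auto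
  have x1: "x \<noteq> 1" using x assms unfolding fq_def by auto
  have x2: "x \<noteq> ?s" using x assms fq_s by auto
  have xs: "?s < x" "x < 1" using x x1 x2 by auto
  have uniq: "y = x" if "?s < y" "y < 1" "J = y * (1 - y^2)" for y
  proof (rule ccontr)
    assume "y \<noteq> x"
    then consider "y < x" | "x < y" by linarith
    then show False
    proof cases
      case 1
      have "?s^2 \<le> y^2" by (rule power_mono) (use that in auto)
      then have "1 \<le> 3 * y^2" using s3 by simp
      moreover have "0 \<le> y" using that s0 by linarith
      ultimately have "fq x < fq y" using 1 by (intro fq_dec) auto
      then show False using that x by (simp add: fq_def)
    next
      case 2
      have "?s^2 \<le> x^2" by (rule power_mono) (use xs in auto)
      then have "1 \<le> 3 * x^2" using s3 by simp
      moreover have "0 \<le> x" using xs s0 by linarith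
      ultimately have "fq y < fq x" using 2 by (intro fq_dec) auto
      then show False using that x by (simp add: fq_def)
    qed
  qed
  have xJ: "J = x * (1 - x^2)" using x(3) unfolding fq_def by simp
  have "Qbig J = x" unfolding Qbig_def
  proof (rule the_equality)
    show "?s < x \<and> x < 1 \<and> J = x * (1 - x^2)" using xs xJ by simp
    fix y assume "?s < y \<and> y < 1 \<and> J = y * (1 - y^2)"
    then show "y = x" using uniq by blast
  qed
  then show ?thesis using xs x by simp
qed

lemma vieta3:
  fixes a b c E J :: real
  assumes pa: "a^3 - 2*a^2 + 4*E*a - 2*J^2 = 0" and pb: "b^3 - 2*b^2 + 4*E*b - 2*J^2 = 0"
    and pc: "c^3 - 2*c^2 + 4*E*c - 2*J^2 = 0" and ab: "a \<noteq> b" and ac: "a \<noteq> c" and bc: "b \<noteq> c"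
  shows "a+b+c = 2 \<and> a*b+b*c+c*a = 4*E \<and> a*b*c = 2*J^2"
proof -
  have "(a-b)*(a^2+a*b+b^2 - 2*(a+b) + 4*E) = 0" using pa pb by algebra
  then have k1: "a^2+a*b+b^2 - 2*(a+b) + 4*E = 0" using ab by simp
  have "(a-c)*(a^2+a*c+c^2 - 2*(a+c) + 4*E) = 0" using pa pc by algebra
  then have k2: "a^2+a*c+c^2 - 2*(a+c) + 4*E = 0" using ac by simp
  have "(b - c) * (a+b+c-2) = 0" using k1 k2 by algebra
  then have s: "a+b+c = 2" using bc by simp
  have e: "a*b+b*c+c*a = 4*E" using k1 s by algebra
  have "a*b*c = 2*J^2" using pa s e by algebra
  then show ?thesis using s e by simp
qed

lemma D1_roots:
  assumes "(J, E) \<in> D1"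
  shows "J > 0 \<and> (\<exists>a b c. roots3 J E a b c)"
proof -
  have J: "0 < J" "J < sqrt (4/27)" and E: "Eminus J < E" "E < Eplus J" using assms unfolding D1_def by auto
  define q where "q = qsmall J"
  define Q where "Q = Qbig J"
  have q: "0 < q" "q < 1/sqrt 3" "J = q * (1 - q^2)" using q_exists[OF J] unfolding q_def fq_def by auto
  have Q: "1/sqrt 3 < Q" "Q < 1" "J = Q * (1 - Q^2)" using Q_exists[OF J] unfolding Q_def fq_def by auto
  have Em: "Eminus J = (1 - Q^2) * (3 * Q^2 + 1) / 4" unfolding Eminus_def Q_def Let_def ..
  have Ep: "Eplus J = (1 - q^2) * (3 * q^2 + 1) / 4" unfolding Eplus_def q_def Let_def ..
  define p where "p x = x^3 - 2*x^2 + 4*E*x - 2*J^2" for x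
  have pc: "continuous_on S p" for S unfolding p_def by (intro continuous_intros)
  define sQ where "sQ = 1 - Q^2"
  define sq where "sq = 1 - q^2"
  have qQ: "q < Q" using q Q by simp
  have Q0: "0 < Q" using Q(1) by (smt (verit) divide_pos_pos real_sqrt_gt_zero)
  have "Q^2 < 1^2" using Q Q0 by (intro power_strict_mono) auto
  then have sQ0: "0 < sQ" unfolding sQ_def by simp
  have sQsq: "sQ < sq" unfolding sQ_def sq_def using qQ q by (simp add: power_strict_mono)
  have sq1: "sq < 3" unfolding sq_def using zero_le_power2[of q] by linarith
  have pQ: "p sQ = 4 * sQ * (E - Eminus J)" unfolding p_def sQ_def Em using Q(3) by algebra
  have pq: "p sq = 4 * sq * (E - Eplus J)" unfolding p_def sq_def Ep using q(3) by algebra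
  have pQpos: "p sQ > 0" unfolding pQ using sQ0 E by simp
  have sq0: "0 < sq" using sQ0 sQsq by simp
  have pqneg: "p sq < 0" unfolding pq using sq0 E by (simp add: mult_pos_neg)
  have p0: "p 0 < 0" unfolding p_def using J by simp
  have Em0: "Eminus J > 0" unfolding Em using sQ0 unfolding sQ_def
    by (intro divide_pos_pos mult_pos_pos) (auto intro: add_nonneg_pos)
  have J2: "J^2 < 4/27"
  proof -
    have "J^2 < (sqrt (4/27))^2" using J by (intro power_strict_mono) auto
    then show ?thesis by simp
  qed
  have p3: "p 3 > 0" unfolding p_def using J2 Em0 E by simp
  obtain a where a: "0 \<le> a" "a \<le> sQ" "p a = 0"
    using IVT'[of p 0 0 sQ, OF less_imp_le[OF p0] less_imp_le[OF pQpos] less_imp_le[OF sQ0] pc] by auto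
  obtain b where b: "sQ \<le> b" "b \<le> sq" "p b = 0"
    using IVT2'[of p sq 0 sQ, OF less_imp_le[OF pqneg] less_imp_le[OF pQpos] less_imp_le[OF sQsq] pc] by auto
  obtain c where c: "sq \<le> c" "c \<le> 3" "p c = 0"
    using IVT'[of p sq 0 3, OF less_imp_le[OF pqneg] less_imp_le[OF p3] less_imp_le[OF sq1] pc] by auto
  have a0: "a \<noteq> 0" "a \<noteq> sQ" using a p0 pQpos by auto
  have b0: "b \<noteq> sQ" "b \<noteq> sq" using b pqneg pQpos by auto
  have c0: "c \<noteq> sq" using c pqneg by auto
  have abc: "0 < a" "a < b" "b < c" using a b c a0 b0 c0 by auto
  have v: "a+b+c = 2 \<and> a*b+b*c+c*a = 4*E \<and> a*b*c = 2*J^2"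
    by (rule vieta3) (use a b c abc in \<open>auto simp: p_def\<close>)
  have "roots3 J E a b c" by unfold_locales (use abc v in auto)
  then show ?thesis using J by blast
qed


lemma inv_deriv:
  fixes f \<Phi> F G :: "real \<Rightarrow> real"
  assumes d: "d > 0"
    and fder: "(f has_real_derivative f') (at z0)" and fne: "f' \<noteq> 0"
    and cont: "\<And>z. \<bar>z - z0\<bar> \<le> d \<Longrightarrow> isCont f z"
    and FP: "\<And>z. \<bar>z - z0\<bar> \<le> d \<Longrightarrow> F (f z) = \<Phi> z"
    and Gf: "\<And>z. \<bar>z - z0\<bar> \<le> d \<Longrightarrow> G (f z) = z"
    and Pder: "(\<Phi> has_real_derivative \<Phi>') (at z0)"
  shows "(F has_real_derivative \<Phi>' / f') (at (f z0))"
proof -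
  let ?A = "f (z0 - d)"
  let ?B = "f (z0 + d)"
  let ?D = "{z0 - d..z0 + d}"
  have fc: "continuous_on ?D f"
    using cont by (intro continuous_at_imp_continuous_on ballI) auto
  have sub: "{min ?A ?B <..< max ?A ?B} \<subseteq> f ` ?D"
    using d fc by (intro connected_contains_Ioo connected_continuous_image) (auto split: split_min split_max)
  have "(?A < f z0 \<and> f z0 < ?B) \<or> (?B < f z0 \<and> f z0 < ?A)"
    using d Gf by (intro continuous_inj_imp_mono[OF _ _ fc] inj_on_imageI2[of G, OF inj_onI]) auto
  then have fz0: "min ?A ?B < f z0" "f z0 < max ?A ?B" by auto
  have Gc: "isCont G (f z0)" by (rule isCont_inverse_function[OF d Gf cont])
  have G0: "G (f z0) = z0" using Gf d by simp
  have inv: "f (G y) = y" if "min ?A ?B < y" "y < max ?A ?B" for y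
  proof -
    have "y \<in> f ` ?D" by (rule subsetD[OF sub]) (use that in simp)
    then obtain z where z: "z \<in> ?D" "y = f z" by blast
    then have "\<bar>z - z0\<bar> \<le> d" by auto
    then show ?thesis using Gf z by simp
  qed
  have Gder: "(G has_real_derivative inverse f') (at (f z0))"
    by (rule DERIV_inverse_function[OF _ fne fz0 inv Gc]) (use fder G0 in auto)
  have "((\<lambda>y. \<Phi> (G y)) has_real_derivative \<Phi>' * inverse f') (at (f z0))"
    by (rule DERIV_chain2[OF _ Gder]) (use Pder G0 in simp)
  then show ?thesis
  proof (rule has_field_derivative_transform_within_open[where S = "{min ?A ?B <..< max ?A ?B}", THEN DERIV_cong])
    show "open {min ?A ?B <..< max ?A ?B}" by simp
    show "f z0 \<in> {min ?A ?B <..< max ?A ?B}" using fz0 by simp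
    fix y assume "y \<in> {min ?A ?B <..< max ?A ?B}"
    then have "y \<in> f ` ?D" using sub by blast
    then obtain z where z: "z \<in> ?D" "y = f z" by blast
    then have "\<bar>z - z0\<bar> \<le> d" by auto
    then show "\<Phi> (G y) = F y" using Gf FP z by simp
  qed (simp add: divide_inverse)
qed


definition PiP :: "real \<Rightarrow> real \<Rightarrow> real \<Rightarrow> real \<Rightarrow> real \<Rightarrow> real" where
  "PiP a p q Z Y = 4*p*q^3*Y^2 + 4*p*q^3*Z*Y + 1*p*q^3*Z^2 + 12*p^2*q^2*Y^2 + 10*p^2*q^2*Z*Y + 2*p^2*q^2*Z^2 + 12*p^3*q*Y^2 + 8*p^3*q*Z*Y + 1*p^3*q*Z^2 + 4*p^4*Y^2 + 2*p^4*Z*Y + 12*a*p*q^2*Y^2 + 12*a*p*q^2*Z*Y + 3*a*p*q^2*Z^2 + 21*a*p^2*q*Y^2 + 18*a*p^2*q*Z*Y + 3*a*p^2*q*Z^2 + 9*a*p^3*Y^2 + 6*a*p^3*Z*Y + 9*a^2*p*q*Y^2 + 12*a^2*p*q*Z*Y + 3*a^2*p*q*Z^2 + 6*a^2*p^2*Y^2 + 6*a^2*p^2*Z*Y + 2*a^3*q*Z*Y + 1*a^3*q*Z^2 + 1*a^3*p*Y^2 + 2*a^3*p*Z*Y"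

definition TMt :: "real \<Rightarrow> real \<Rightarrow> real \<Rightarrow> real \<Rightarrow> real \<Rightarrow> real \<Rightarrow> real" where
  "TMt n bb A B X Y = 2*n*B*X+(n-3*bb*A)*A*Y"
definition TMm :: "real \<Rightarrow> real \<Rightarrow> real \<Rightarrow> real \<Rightarrow> real \<Rightarrow> real \<Rightarrow> real \<Rightarrow> real" where
  "TMm n bb A B c X Y = 2*(n-bb*A)*(X+Y)*A*B - c*TMt n bb A B X Y - (2*n*Y+(n-3*bb*A)*X)*A*B"

lemma poly_id:
  fixes a p q X Y :: real
  shows "(a*(a+p)*(a+p+q)) * (TMm (2*a*(a+p+q)-a*(a+p)-(a+p)*(a+p+q)) (a+p) (p+q) q (a+p+q) X Y * TMt (a+(a+p+q)-2*(a+p)) 1 (p+q) q X Y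
       - TMt (2*a*(a+p+q)-a*(a+p)-(a+p)*(a+p+q)) (a+p) (p+q) q X Y * TMm (a+(a+p+q)-2*(a+p)) 1 (p+q) q (a+p+q) X Y)
     + 2*(X+Y)*TMm (2*a*(a+p+q)-a*(a+p)-(a+p)*(a+p+q)) (a+p) (p+q) q (a+p+q) X Y*(p+q)^2*q^2*p
     = 4*PiP a p q (X-Y) Y*(p+q)^2*q^2*p"
  unfolding PiP_def TMt_def TMm_def by algebra


lemma poly_id2:
  fixes a b c X Y :: real
  shows "(a*b*c) * (TMm (2*a*c-a*b-b*c) b (c-a) (c-b) c X Y * TMt (a+c-2*b) 1 (c-a) (c-b) X Y
       - TMt (2*a*c-a*b-b*c) b (c-a) (c-b) X Y * TMm (a+c-2*b) 1 (c-a) (c-b) c X Y)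
     + 2*(X+Y)*TMm (2*a*c-a*b-b*c) b (c-a) (c-b) c X Y*(c-a)^2*(c-b)^2*(b-a)
     = 4*PiP a (b-a) (c-b) (X-Y) Y*(c-a)^2*(c-b)^2*(b-a)"
  unfolding PiP_def TMt_def TMm_def by algebra

lemma PiP_pos:
  fixes a p q Z Y :: real
  assumes "a > 0" "p > 0" "q > 0" "Z \<ge> 0" "Y \<ge> 0" "Z + Y > 0"
  shows "PiP a p q Z Y > 0"
proof -
  have nn: "PiP a p q Z Y \<ge> 4*p^4*Y^2 + 1*p*q^3*Z^2"
    unfolding PiP_def using assms
    by (simp add: add_nonneg_nonneg mult_nonneg_nonneg add_increasing add_increasing2)
  have "4*p^4*Y^2 + 1*p*q^3*Z^2 > 0"
  proof (cases "Y > 0")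
    case True
    then have "4*p^4*Y^2 > 0" using assms by simp
    moreover have "1*p*q^3*Z^2 \<ge> 0" using assms by simp
    ultimately show ?thesis by linarith
  next
    case False
    then have "Z > 0" using assms by simp
    then have "1*p*q^3*Z^2 > 0" using assms by simp
    moreover have "4*p^4*Y^2 \<ge> 0" using assms by simp
    ultimately show ?thesis by linarith
  qed
  then show ?thesis using nn by linarith
qed


lemma closed_t:
  fixes A B D X Y n bb :: real
  assumes "A \<noteq> 0" "B \<noteq> 0" "D \<noteq> 0" "bb \<noteq> 0"
  shows "- ((n/(bb*A)) * (X/(A*D)) + ((-1 + n/(bb*A))/2 - 1) * (Y/(B*D)))
       = - TMt n bb A B X Y / (2*bb*A^2*B*D)"
  using assms unfolding TMt_def by (simp add: field_simps power2_eq_square)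

lemma closed_m:
  fixes A B D X Y n bb c :: real
  assumes "A \<noteq> 0" "B \<noteq> 0" "D \<noteq> 0" "bb \<noteq> 0"
  shows "(-1 + n/(bb*A))/2 * ((X+Y)/D) + c * (- TMt n bb A B X Y / (2*bb*A^2*B*D) / 2)
         - ((n/(bb*A)) * (Y/D) + ((-1 + n/(bb*A))/2 - 1) * (X/D)) / 2
       = TMm n bb A B c X Y / (4*bb*A^2*B*D)"
  using assms unfolding TMm_def TMt_def by (simp add: field_simps power2_eq_square)


lemma final_alg:
  fixes a b c J W N C3v S3v C1v S1v aE aJ eE jJ s tE mE tJ mJ :: real
  assumes pos: "0 < a" "a < b" "b < c" "J > 0" and abc: "a*b*c = 2*J^2"
    and Wp: "W > 0" and Yp: "N - (c-b)*W \<ge> 0" and XY: "((c-a)*W - N) - (N - (c-b)*W) \<ge> 0"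
    and C3: "C3v = ((c-a)*W - N)/((c-a)*(b-a))" and S3: "S3v = (N - (c-b)*W)/((c-b)*(b-a))"
    and C1: "C1v = (N - (c-b)*W)/(b-a)" and S1: "S1v = ((c-a)*W - N)/(b-a)"
    and aE: "aE = (2*a*c-a*b-b*c)/(b*(c-a))" and aJ: "aJ = (a+c-2*b)/(1*(c-a))"
    and eE: "eE = (b-a)*(c-b)/(4*b)" and jJ: "jJ = (b-a)*(b-c)/(4*J)"
    and s: "s* s = 2"
    and tE: "tE = - (aE*C3v + ((-1+aE)/2-1)*S3v)"
    and mE: "mE = (-1+aE)/2*W + c*(tE/2) - (aE*C1v + ((-1+aE)/2-1)*S1v)/2"
    and tJ: "tJ = - (aJ*C3v + ((-1+aJ)/2-1)*S3v)"
    and mJ: "mJ = (-1+aJ)/2*W + c*(tJ/2) - (aJ*C1v + ((-1+aJ)/2-1)*S1v)/2"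
  shows "(J * (2* s*(tE/2)/eE) / 2) * (s*mJ/jJ) - (s*mE/eE) * ((2* s*W + J*(2* s*(tJ/2)/jJ))/2) < 0"
proof -
  define A where "A = c - a"
  define B where "B = c - b"
  define D where "D = b - a"
  define X where "X = A*W - N"
  define Y where "Y = N - B*W"
  have A0: "A > 0" "A \<noteq> 0" unfolding A_def using pos by auto
  have B0: "B > 0" "B \<noteq> 0" unfolding B_def using pos by auto
  have D0: "D > 0" "D \<noteq> 0" unfolding D_def using pos by auto
  have b0: "b \<noteq> 0" using pos by simp
  have WXY: "W = (X+Y)/D" unfolding X_def Y_def D_def A_def B_def using D0 unfolding D_def by (simp add: field_simps)
  have Y0: "Y \<ge> 0" unfolding Y_def B_def using Yp .
  have XY0: "X - Y \<ge> 0" unfolding X_def Y_def A_def B_def using XY .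
  have XYp: "X + Y > 0" using WXY Wp D0 by (simp add: zero_less_divide_iff)
  have C1': "C1v = Y/D" unfolding C1 Y_def B_def D_def ..
  have S1': "S1v = X/D" unfolding S1 X_def A_def D_def ..
  define nE where "nE = 2*a*c-a*b-b*c"
  define nJ where "nJ = a+c-2*b"
  have tE': "tE = - TMt nE b A B X Y / (2*b*A^2*B*D)"
    unfolding tE aE C3 S3 nE_def[symmetric] A_def[symmetric] B_def[symmetric] D_def[symmetric] X_def[symmetric] Y_def[symmetric]
    by (rule closed_t) (use A0 B0 D0 b0 in auto)
  have tJ': "tJ = - TMt nJ 1 A B X Y / (2*1*A^2*B*D)"
    unfolding tJ aJ C3 S3 nJ_def[symmetric] A_def[symmetric] B_def[symmetric] D_def[symmetric] X_def[symmetric] Y_def[symmetric]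
    by (rule closed_t) (use A0 B0 D0 in auto)
  have mE': "mE = TMm nE b A B c X Y / (4*b*A^2*B*D)"
    unfolding mE tE' aE C1' S1' nE_def[symmetric] A_def[symmetric] WXY
    by (rule closed_m) (use A0 B0 D0 b0 in auto)
  have mJ': "mJ = TMm nJ 1 A B c X Y / (4*1*A^2*B*D)"
    unfolding mJ tJ' aJ C1' S1' nJ_def[symmetric] A_def[symmetric] WXY
    by (rule closed_m) (use A0 B0 D0 in auto)
  define K where "K = (a*b*c/2)*(tE*mJ - mE*tJ) - 2*W*((b-a)*(b-c)/4)*mE"
  have eE0: "eE \<noteq> 0" unfolding eE using pos by simp
  have jJ0: "jJ \<noteq> 0" unfolding jJ using pos by simp
  have Jj: "J * jJ = (b-a)*(b-c)/4" unfolding jJ using pos by simp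
  have step1: "(J * (2* s*(tE/2)/eE) / 2) * (s*mJ/jJ) - (s*mE/eE) * ((2* s*W + J*(2* s*(tJ/2)/jJ))/2)
      = (J*(tE*mJ - mE*tJ) - 2*W*jJ*mE) / (eE*jJ)"
  proof -
    have "(J * (2* s*(tE/2)/eE) / 2) * (s*mJ/jJ) - (s*mE/eE) * ((2* s*W + J*(2* s*(tJ/2)/jJ))/2)
        = (s* s) * (J*(tE*mJ - mE*tJ) - 2*W*jJ*mE) / (2*(eE*jJ))"
      using eE0 jJ0 by (simp add: field_simps)
    also have "\<dots> = (J*(tE*mJ - mE*tJ) - 2*W*jJ*mE) / (eE*jJ)"
      unfolding s using eE0 jJ0 by (simp add: field_simps)
    finally show ?thesis .
  qed
  have step2: "(J*(tE*mJ - mE*tJ) - 2*W*jJ*mE) / (eE*jJ) = K / (eE * ((b-a)*(b-c)/4))"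
  proof -
    have "(J*(tE*mJ - mE*tJ) - 2*W*jJ*mE) / (eE*jJ) = (J*J*(tE*mJ - mE*tJ) - 2*W*(J*jJ)*mE) / (eE*(J*jJ))"
      using pos(4) eE0 jJ0 by (simp add: field_simps)
    also have "\<dots> = K / (eE * ((b-a)*(b-c)/4))"
      unfolding K_def Jj using abc by (simp add: power2_eq_square)
    finally show ?thesis .
  qed
  define TE where "TE = TMt nE b A B X Y"
  define ME where "ME = TMm nE b A B c X Y"
  define TJ where "TJ = TMt nJ 1 A B X Y"
  define MJ where "MJ = TMm nJ 1 A B c X Y"
  have step3: "K * (16*b*A^4*B^2*D^2) = (a*b*c) * (ME*TJ - TE*MJ) + 2*(X+Y)*ME*A^2*B^2*D"
  proof -
    have bc: "b - c = - B" unfolding B_def by simp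
    have ba: "b - a = D" unfolding D_def by simp
    show ?thesis
      unfolding K_def tE' tJ' mE' mJ' WXY bc ba TE_def[symmetric] ME_def[symmetric] TJ_def[symmetric] MJ_def[symmetric]
      using A0 B0 D0 b0 by (simp add: field_simps power2_eq_square power3_eq_cube power4_eq_xxxx)
  qed
  have pid: "(a*b*c) * (ME*TJ - TE*MJ) + 2*(X+Y)*ME*A^2*B^2*D = 4*PiP a (b-a) (c-b) (X-Y) Y*A^2*B^2*D"
    unfolding TE_def ME_def TJ_def MJ_def nE_def nJ_def A_def B_def D_def by (rule poly_id2)
  have Pp: "PiP a (b-a) (c-b) (X-Y) Y > 0"
    by (rule PiP_pos) (use pos Y0 XY0 XYp in auto)
  have Kp: "K > 0"
  proof -
    have k1: "K * (16*b*A^4*B^2*D^2) > 0" unfolding step3 pid using Pp A0 B0 D0 by simp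
    have k2: "16*b*A^4*B^2*D^2 > 0" using pos A0 B0 D0 by simp
    show ?thesis using zero_less_mult_pos2[OF k1 k2] .
  qed
  have den: "eE * ((b-a)*(b-c)/4) < 0"
  proof -
    have "eE > 0" unfolding eE using pos by simp
    moreover have "(b-a)*(b-c)/4 < 0" using pos by (simp add: mult_pos_neg)
    ultimately show ?thesis by (simp add: mult_pos_neg)
  qed
  show ?thesis unfolding step1 step2 using Kp den by (simp add: divide_pos_neg)
qed


lemma gen_family:
  fixes \<delta> \<delta>' f :: "real \<Rightarrow> real" and PAIR :: "real \<Rightarrow> real \<times> real" and z0 rad f0 :: real
  defines "af \<equiv> \<lambda>z. ((2 - z) - sqrt (\<delta> z)) / 2"
    and "cf \<equiv> \<lambda>z. ((2 - z) + sqrt (\<delta> z)) / 2"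
  assumes rad: "rad > 0"
    and d\<delta>: "\<And>z. z \<in> ball z0 rad \<Longrightarrow> (\<delta> has_real_derivative \<delta>' z) (at z)"
    and c\<delta>': "continuous_on (ball z0 rad) \<delta>'"
    and df0: "(f has_real_derivative f0) (at z0)"
    and f'ne: "f0 \<noteq> 0"
    and fc: "\<And>z. z \<in> ball z0 rad \<Longrightarrow> isCont f z"
    and base: "0 < af z0" "af z0 < z0" "z0 < cf z0"
    and R3: "\<And>z. z \<in> ball z0 rad \<Longrightarrow> 0 < af z \<Longrightarrow> af z < z \<Longrightarrow> z < cf z \<Longrightarrow>
               roots3 (fst (PAIR (f z))) (snd (PAIR (f z))) (af z) z (cf z)"
  shows "((\<lambda>y. Tper (fst (PAIR y)) (snd (PAIR y))) has_real_derivative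
           2 * sqrt 2 * (- ((inverse (sqrt (\<delta> z0)) / 2 * \<delta>' z0) * C3 (cf z0 - af z0) (cf z0 - z0)
                + ((-1 + inverse (sqrt (\<delta> z0)) / 2 * \<delta>' z0)/2 - 1) * S3 (cf z0 - af z0) (cf z0 - z0)) / 2) / f0) (at (f z0))
      \<and> ((\<lambda>y. Mt (fst (PAIR y)) (snd (PAIR y))) has_real_derivative
           sqrt 2 * ((-1 + inverse (sqrt (\<delta> z0)) / 2 * \<delta>' z0)/2 * Wf (cf z0 - af z0) (cf z0 - z0)
             + cf z0 * (- ((inverse (sqrt (\<delta> z0)) / 2 * \<delta>' z0) * C3 (cf z0 - af z0) (cf z0 - z0)
                + ((-1 + inverse (sqrt (\<delta> z0)) / 2 * \<delta>' z0)/2 - 1) * S3 (cf z0 - af z0) (cf z0 - z0)) / 2)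
             - ((inverse (sqrt (\<delta> z0)) / 2 * \<delta>' z0) * C1 (cf z0 - af z0) (cf z0 - z0)
                + ((-1 + inverse (sqrt (\<delta> z0)) / 2 * \<delta>' z0)/2 - 1) * S1 (cf z0 - af z0) (cf z0 - z0)) / 2) / f0) (at (f z0))"
proof -
  define P where "P z = (z \<in> ball z0 rad \<and> 0 < \<delta> z \<and> 0 < af z \<and> af z < z \<and> z < cf z)" for z
  have z0b: "z0 \<in> ball z0 rad" using rad by simp
  have "af z0 < cf z0" using base by simp
  then have sd0: "sqrt (\<delta> z0) > 0" unfolding af_def cf_def by simp
  then have d0: "\<delta> z0 > 0" by simp
  have P0: "P z0" unfolding P_def using z0b d0 base by simp
  have t\<delta>: "(\<delta> \<longlongrightarrow> \<delta> z0) (at z0)"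
    using DERIV_isCont[OF d\<delta>[OF z0b]] by (simp add: isCont_def)
  have taf: "(af \<longlongrightarrow> af z0) (at z0)" unfolding af_def by (intro tendsto_intros t\<delta>) simp
  have tcf: "(cf \<longlongrightarrow> cf z0) (at z0)" unfolding cf_def by (intro tendsto_intros t\<delta>) simp
  have "eventually P (at z0)"
  proof -
    have e1: "eventually (\<lambda>z. z \<in> ball z0 rad) (at z0)"
      using eventually_at_ball[OF rad, of z0 UNIV] by simp
    have e2: "eventually (\<lambda>z. 0 < \<delta> z) (at z0)" by (rule order_tendstoD(1)[OF t\<delta> d0])
    have e3: "eventually (\<lambda>z. 0 < af z) (at z0)" by (rule order_tendstoD(1)[OF taf base(1)])
    have e4: "eventually (\<lambda>z. 0 < z - af z) (at z0)"
      by (rule order_tendstoD(1)[OF tendsto_diff[OF tendsto_ident_at taf]]) (use base in simp)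
    have e5: "eventually (\<lambda>z. 0 < cf z - z) (at z0)"
      by (rule order_tendstoD(1)[OF tendsto_diff[OF tcf tendsto_ident_at]]) (use base in simp)
    show ?thesis using e1 e2 e3 e4 e5 unfolding P_def
      by eventually_elim auto
  qed
  then obtain r1 where r1: "r1 > 0" "\<And>z. z \<noteq> z0 \<Longrightarrow> dist z z0 < r1 \<Longrightarrow> P z"
    unfolding eventually_at by auto
  define U where "U = ball z0 r1"
  have PU: "P z" if "z \<in> U" for z
    using r1 P0 that unfolding U_def by (cases "z = z0") (auto simp: dist_commute)
  have U: "open U" "convex U" "z0 \<in> U" unfolding U_def using r1 by auto
  have Ub: "z \<in> ball z0 rad" if "z \<in> U" for z using PU[OF that] unfolding P_def by simp
  define Af where "Af z = sqrt (\<delta> z)" for z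
  define Bf where "Bf z = cf z - z" for z
  define Af' where "Af' z = inverse (sqrt (\<delta> z)) / 2 * \<delta>' z" for z
  define Bf' where "Bf' z = (-1 + Af' z)/2 - 1" for z
  have dA: "(Af has_real_derivative Af' z) (at z)" if "z \<in> U" for z
  proof -
    have "0 < \<delta> z" using PU[OF that] unfolding P_def by simp
    then show ?thesis unfolding Af_def[abs_def] Af'_def
      by (rule DERIV_chain2[OF DERIV_real_sqrt d\<delta>[OF Ub[OF that]]])
  qed
  have dB: "(Bf has_real_derivative Bf' z) (at z)" if "z \<in> U" for z
  proof -
    have "((\<lambda>z. ((2 - z) + Af z) / 2 - z) has_real_derivative ((0 - 1 + Af' z) / 2 - 1)) (at z)"
      by (intro DERIV_diff DERIV_cdivide DERIV_add DERIV_const DERIV_ident dA that) 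
    then show ?thesis unfolding Bf_def[abs_def] Bf'_def cf_def Af_def by simp
  qed
  have cd: "continuous_on U \<delta>"
    by (rule continuous_at_imp_continuous_on) (use DERIV_isCont d\<delta> Ub in blast)
  have cd': "continuous_on U \<delta>'" by (rule continuous_on_subset[OF c\<delta>']) (use Ub in blast)
  have dpos: "\<And>z. z \<in> U \<Longrightarrow> sqrt (\<delta> z) \<noteq> 0"
  proof -
    fix z assume "z \<in> U"
    then have "0 < \<delta> z" using PU unfolding P_def by blast
    then show "sqrt (\<delta> z) \<noteq> 0" by simp
  qed
  have cA': "continuous_on U Af'" unfolding Af'_def
    by (intro continuous_intros cd cd') (use dpos in auto)
  have cB': "continuous_on U Bf'" unfolding Bf'_def by (intro continuous_intros cA') simp
  have pA: "Af z > 0" if "z \<in> U" for z using PU[OF that] unfolding P_def Af_def by simp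
  have pB: "Bf z > 0" if "z \<in> U" for z using PU[OF that] unfolding P_def Bf_def by simp
  note Wd = W_chain[OF U dA dB cA' cB' pA pB]
  note Nd = N_chain[OF U dA dB cA' cB' pA pB]
  have AfE: "Af z = cf z - af z" for z unfolding Af_def cf_def af_def by (simp add: field_simps)
  have eqT: "Tper (fst (PAIR (f z))) (snd (PAIR (f z))) = 2 * sqrt 2 * Wf (Af z) (Bf z)" if "z \<in> U" for z
  proof -
    interpret R: roots3 "fst (PAIR (f z))" "snd (PAIR (f z))" "af z" z "cf z"
      using R3 PU[OF that] unfolding P_def by blast
    show ?thesis unfolding R.Tper_eq AfE Bf_def ..
  qed
  have eqM: "Mt (fst (PAIR (f z))) (snd (PAIR (f z))) = sqrt 2 * (cf z * Wf (Af z) (Bf z) - Nf (Af z) (Bf z))" if "z \<in> U" for z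
  proof -
    interpret R: roots3 "fst (PAIR (f z))" "snd (PAIR (f z))" "af z" z "cf z"
      using R3 PU[OF that] unfolding P_def by blast
    show ?thesis unfolding R.Mt_eq AfE Bf_def ..
  qed
  have eqG: "(r2 (fst (PAIR (f z))) (snd (PAIR (f z))))^2 = z" if "z \<in> U" for z
  proof -
    interpret R: roots3 "fst (PAIR (f z))" "snd (PAIR (f z))" "af z" z "cf z"
      using R3 PU[OF that] unfolding P_def by blast
    show ?thesis unfolding R.r2_eq using R.bpos by simp
  qed
  obtain d where d: "d > 0" "\<And>z. \<bar>z - z0\<bar> \<le> d \<Longrightarrow> z \<in> U"
  proof
    show "r1/2 > 0" using r1 by simp
    fix z assume "\<bar>z - z0\<bar> \<le> r1/2"
    then have "\<bar>z0 - z\<bar> < r1" using r1 by (simp add: abs_minus_commute)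
    then show "z \<in> U" unfolding U_def by (simp add: dist_real_def)
  qed
  have fcont: "isCont f z" if "\<bar>z - z0\<bar> \<le> d" for z
    using fc[OF Ub[OF d(2)[OF that]]] .
  have dcf: "(cf has_real_derivative (-1 + Af' z0)/2) (at z0)"
  proof -
    have "((\<lambda>z. ((2 - z) + Af z) / 2) has_real_derivative ((0 - 1 + Af' z0) / 2)) (at z0)"
      by (intro DERIV_cdivide DERIV_add DERIV_diff DERIV_const DERIV_ident dA U(3))
    then show ?thesis unfolding cf_def Af_def[symmetric] by simp
  qed
  have T: "((\<lambda>y. Tper (fst (PAIR y)) (snd (PAIR y))) has_real_derivative
        2 * sqrt 2 * (- (Af' z0 * C3 (Af z0) (Bf z0) + Bf' z0 * S3 (Af z0) (Bf z0)) / 2) / f0) (at (f z0))"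
  proof (rule inv_deriv[OF d(1) df0 f'ne fcont])
    fix z assume z: "\<bar>z - z0\<bar> \<le> d"
    show "Tper (fst (PAIR (f z))) (snd (PAIR (f z))) = 2 * sqrt 2 * Wf (Af z) (Bf z)" by (rule eqT[OF d(2)[OF z]])
    show "(\<lambda>y. (r2 (fst (PAIR y)) (snd (PAIR y)))^2) (f z) = z" using eqG[OF d(2)[OF z]] by simp
  next
    show "((\<lambda>z. 2 * sqrt 2 * Wf (Af z) (Bf z)) has_real_derivative
        2 * sqrt 2 * (- (Af' z0 * C3 (Af z0) (Bf z0) + Bf' z0 * S3 (Af z0) (Bf z0)) / 2)) (at z0)"
      by (intro DERIV_cmult Wd)
  qed
  have M: "((\<lambda>y. Mt (fst (PAIR y)) (snd (PAIR y))) has_real_derivative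
        sqrt 2 * ((-1 + Af' z0)/2 * Wf (Af z0) (Bf z0) + cf z0 * (- (Af' z0 * C3 (Af z0) (Bf z0) + Bf' z0 * S3 (Af z0) (Bf z0)) / 2)
            - (Af' z0 * C1 (Af z0) (Bf z0) + Bf' z0 * S1 (Af z0) (Bf z0)) / 2) / f0) (at (f z0))"
  proof (rule inv_deriv[OF d(1) df0 f'ne fcont])
    fix z assume z: "\<bar>z - z0\<bar> \<le> d"
    show "Mt (fst (PAIR (f z))) (snd (PAIR (f z))) = sqrt 2 * (cf z * Wf (Af z) (Bf z) - Nf (Af z) (Bf z))" by (rule eqM[OF d(2)[OF z]])
    show "(\<lambda>y. (r2 (fst (PAIR y)) (snd (PAIR y)))^2) (f z) = z" using eqG[OF d(2)[OF z]] by simp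
  next
    have "((\<lambda>z. cf z * Wf (Af z) (Bf z)) has_real_derivative
        (-1 + Af' z0)/2 * Wf (Af z0) (Bf z0) + cf z0 * (- (Af' z0 * C3 (Af z0) (Bf z0) + Bf' z0 * S3 (Af z0) (Bf z0)) / 2)) (at z0)"
      using DERIV_mult[OF dcf Wd] by (simp add: algebra_simps)
    then show "((\<lambda>z. sqrt 2 * (cf z * Wf (Af z) (Bf z) - Nf (Af z) (Bf z))) has_real_derivative
        sqrt 2 * ((-1 + Af' z0)/2 * Wf (Af z0) (Bf z0) + cf z0 * (- (Af' z0 * C3 (Af z0) (Bf z0) + Bf' z0 * S3 (Af z0) (Bf z0)) / 2)
            - (Af' z0 * C1 (Af z0) (Bf z0) + Bf' z0 * S1 (Af z0) (Bf z0)) / 2)) (at z0)"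
      by (intro DERIV_cmult DERIV_diff Nd)
  qed
  show ?thesis using T M unfolding Af'_def Bf'_def AfE Bf_def by blast
qed


lemma ef_deriv:
  fixes J z :: real
  assumes "z \<noteq> 0"
  shows "((\<lambda>z. (2*J^2 - z^3 + 2*z^2)/(4*z)) has_real_derivative ((- (z^3) + z^2 - J^2)/(2*z^2))) (at z)"
  using assms by (auto intro!: derivative_eq_intros simp: field_simps power2_eq_square power3_eq_cube)

lemma dE_deriv:
  fixes J z :: real
  assumes "z \<noteq> 0"
  shows "((\<lambda>z. (2 - z)^2 - 8*J^2/z) has_real_derivative (-2*(2-z) + 8*J^2/z^2)) (at z)"
  using assms by (auto intro!: derivative_eq_intros simp: field_simps power2_eq_square)

lemma dJ_deriv:
  fixes E z :: real
  shows "((\<lambda>z. 4 + 4*z - 3*z^2 - 16*E) has_real_derivative (4 - 6*z)) (at z)"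
  by (auto intro!: derivative_eq_intros simp: field_simps power2_eq_square)

lemma jf_deriv:
  fixes E z :: real
  assumes "(z^3 - 2*z^2 + 4*E*z)/2 > 0"
  shows "((\<lambda>z. sqrt ((z^3 - 2*z^2 + 4*E*z)/2)) has_real_derivative
           inverse (sqrt ((z^3 - 2*z^2 + 4*E*z)/2)) / 2 * ((3*z^2 - 4*z + 4*E)/2)) (at z)"
proof -
  have g: "((\<lambda>z. (z^3 - 2*z^2 + 4*E*z)/2) has_real_derivative ((3*z^2 - 4*z + 4*E)/2)) (at z)"
    by (auto intro!: derivative_eq_intros simp: field_simps power2_eq_square)
  show ?thesis by (rule DERIV_chain2[OF DERIV_real_sqrt[OF assms] g])
qed

context roots3
begin

lemma E_direction:
  shows "((\<lambda>e. Tper J e) has_real_derivative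
           2 * sqrt 2 * (- ((2*a*c-a*b-b*c)/(b*(c-a)) * C3 (c-a) (c-b)
                + ((-1 + (2*a*c-a*b-b*c)/(b*(c-a)))/2 - 1) * S3 (c-a) (c-b)) / 2) / ((b-a)*(c-b)/(4*b))) (at E)
      \<and> ((\<lambda>e. Mt J e) has_real_derivative
           sqrt 2 * ((-1 + (2*a*c-a*b-b*c)/(b*(c-a)))/2 * Wf (c-a) (c-b)
             + c * (- ((2*a*c-a*b-b*c)/(b*(c-a)) * C3 (c-a) (c-b)
                + ((-1 + (2*a*c-a*b-b*c)/(b*(c-a)))/2 - 1) * S3 (c-a) (c-b)) / 2)
             - ((2*a*c-a*b-b*c)/(b*(c-a)) * C1 (c-a) (c-b)
                + ((-1 + (2*a*c-a*b-b*c)/(b*(c-a)))/2 - 1) * S1 (c-a) (c-b)) / 2) / ((b-a)*(c-b)/(4*b))) (at E)"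
proof -
  define \<delta> where "\<delta> z = (2 - z)^2 - 8*J^2/z" for z
  define \<delta>' where "\<delta>' z = -2*(2-z) + 8*J^2/z^2" for z
  define ef where "ef z = (2*J^2 - z^3 + 2*z^2)/(4*z)" for z
  define eE where "eE = (b-a)*(c-b)/(4*b)"
  have b0: "b > 0" by (rule bpos)
  have ball0: "z \<noteq> 0" if "z \<in> ball b b" for z using that by (auto simp: dist_real_def)
  have J2: "8*J^2 = 4*a*b*c" using v3 by simp
  have db: "\<delta> b = (c - a)^2"
  proof -
    have h1: "8*J^2/b = 4*a*c" using J2 b0 by (simp add: field_simps)
    have h2: "2 - b = a + c" using v1 by simp
    have "\<delta> b = (a + c)^2 - 4*a*c" unfolding \<delta>_def h1 h2 ..
    also have "\<dots> = (c - a)^2" by (simp add: power2_eq_square algebra_simps)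
    finally show ?thesis .
  qed
  have sdb: "sqrt (\<delta> b) = c - a" unfolding db using ab bc by simp
  have afb: "((2 - b) - sqrt (\<delta> b)) / 2 = a" unfolding sdb using v1 by simp
  have cfb: "((2 - b) + sqrt (\<delta> b)) / 2 = c" unfolding sdb using v1 by simp
  have efb: "ef b = E"
  proof -
    have "2*J^2 - b^3 + 2*b^2 = 4*b*E"
    proof -
      have "2*J^2 - b^3 + 2*b^2 = a*b*c - b^3 + (a+b+c)*b^2" using v1 v3 by simp
      also have "\<dots> = b * (a*b+b*c+c*a)" by (simp add: algebra_simps power2_eq_square power3_eq_cube)
      finally show ?thesis using v2 by simp
    qed
    then show ?thesis unfolding ef_def using b0 by simp
  qed
  have eEv: "(- (b^3) + b^2 - J^2)/(2*b^2) = eE"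
  proof -
    have nb: "- (b^3) + b^2 - J^2 = (b-a)*(c-b)*b/2"
    proof -
      have "- (b^3) + b^2 - J^2 = - (b^3) + (a+b+c)/2*b^2 - a*b*c/2" using v1 v3 by simp
      also have "\<dots> = (b-a)*(c-b)*b/2" by (simp add: algebra_simps power2_eq_square power3_eq_cube)
      finally show ?thesis .
    qed
    have "(- (b^3) + b^2 - J^2)/(2*b^2) = ((b-a)*(c-b)*b/2)/(2*b^2)" unfolding nb ..
    also have "\<dots> = eE" unfolding eE_def using b0 by (simp add: field_simps power2_eq_square)
    finally show ?thesis .
  qed
  have aEv: "inverse (sqrt (\<delta> b)) / 2 * \<delta>' b = (2*a*c-a*b-b*c)/(b*(c-a))"
  proof -
    have "8*J^2/b^2 = 4*a*c/b" using J2 b0 by (simp add: field_simps power2_eq_square)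
    then have dv: "\<delta>' b = -2*(a+c) + 4*a*c/b" unfolding \<delta>'_def using v1 by simp
    show ?thesis unfolding sdb dv using ab bc b0 by (simp add: field_simps)
  qed
  have main: "((\<lambda>y. Tper (fst (J, y)) (snd (J, y))) has_real_derivative
           2 * sqrt 2 * (- ((inverse (sqrt (\<delta> b)) / 2 * \<delta>' b) * C3 (((2 - b) + sqrt (\<delta> b)) / 2 - ((2 - b) - sqrt (\<delta> b)) / 2) (((2 - b) + sqrt (\<delta> b)) / 2 - b)
                + ((-1 + inverse (sqrt (\<delta> b)) / 2 * \<delta>' b)/2 - 1) * S3 (((2 - b) + sqrt (\<delta> b)) / 2 - ((2 - b) - sqrt (\<delta> b)) / 2) (((2 - b) + sqrt (\<delta> b)) / 2 - b)) / 2) / eE) (at (ef b))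
      \<and> ((\<lambda>y. Mt (fst (J, y)) (snd (J, y))) has_real_derivative
           sqrt 2 * ((-1 + inverse (sqrt (\<delta> b)) / 2 * \<delta>' b)/2 * Wf (((2 - b) + sqrt (\<delta> b)) / 2 - ((2 - b) - sqrt (\<delta> b)) / 2) (((2 - b) + sqrt (\<delta> b)) / 2 - b)
             + ((2 - b) + sqrt (\<delta> b)) / 2 * (- ((inverse (sqrt (\<delta> b)) / 2 * \<delta>' b) * C3 (((2 - b) + sqrt (\<delta> b)) / 2 - ((2 - b) - sqrt (\<delta> b)) / 2) (((2 - b) + sqrt (\<delta> b)) / 2 - b)
                + ((-1 + inverse (sqrt (\<delta> b)) / 2 * \<delta>' b)/2 - 1) * S3 (((2 - b) + sqrt (\<delta> b)) / 2 - ((2 - b) - sqrt (\<delta> b)) / 2) (((2 - b) + sqrt (\<delta> b)) / 2 - b)) / 2)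
             - ((inverse (sqrt (\<delta> b)) / 2 * \<delta>' b) * C1 (((2 - b) + sqrt (\<delta> b)) / 2 - ((2 - b) - sqrt (\<delta> b)) / 2) (((2 - b) + sqrt (\<delta> b)) / 2 - b)
                + ((-1 + inverse (sqrt (\<delta> b)) / 2 * \<delta>' b)/2 - 1) * S1 (((2 - b) + sqrt (\<delta> b)) / 2 - ((2 - b) - sqrt (\<delta> b)) / 2) (((2 - b) + sqrt (\<delta> b)) / 2 - b)) / 2) / eE) (at (ef b))"
  proof (rule gen_family[where rad = b])
    show "0 < b" by (rule b0)
    fix z assume z: "z \<in> ball b b"
    show "(\<delta> has_real_derivative \<delta>' z) (at z)" unfolding \<delta>_def[abs_def] \<delta>'_def by (rule dE_deriv[OF ball0[OF z]])
  next
    show "continuous_on (ball b b) \<delta>'" unfolding \<delta>'_def[abs_def]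
      by (intro continuous_intros) (use ball0 in auto)
  next
    show "(ef has_real_derivative eE) (at b)" unfolding ef_def[abs_def] eEv[symmetric]
      by (rule ef_deriv) (use b0 in simp)
  next
    show "eE \<noteq> 0" unfolding eE_def using ab bc b0 by simp
  next
    fix z assume z: "z \<in> ball b b"
    show "isCont ef z" unfolding ef_def[abs_def] using ball0[OF z] by (intro continuous_intros) simp
  next
    show "0 < ((2 - b) - sqrt (\<delta> b)) / 2" unfolding afb by (rule apos)
    show "((2 - b) - sqrt (\<delta> b)) / 2 < b" unfolding afb by (rule ab)
    show "b < ((2 - b) + sqrt (\<delta> b)) / 2" unfolding cfb by (rule bc)
  next
    fix z assume z: "z \<in> ball b b" and h: "0 < ((2 - z) - sqrt (\<delta> z)) / 2" "((2 - z) - sqrt (\<delta> z)) / 2 < z"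
      "z < ((2 - z) + sqrt (\<delta> z)) / 2"
    have z0: "z > 0" using h by linarith
    have hh: "2 < sqrt (\<delta> z) + z * 3" "z * 3 < sqrt (\<delta> z) + 2" using h(2) h(3) by (simp_all add: field_simps)
    have sp: "sqrt (\<delta> z) > 0" using hh by linarith
    then have dz: "\<delta> z > 0" by simp
    have sq: "sqrt (\<delta> z) * sqrt (\<delta> z) = \<delta> z" using dz by simp
    define x where "x = sqrt (\<delta> z)"
    have prod: "((2 - z) - x) / 2 * (((2 - z) + x) / 2) = 2*J^2/z"
    proof -
      have "((2 - z) - x) / 2 * (((2 - z) + x) / 2) = ((2-z)^2 - x*x)/4" by (simp add: field_simps power2_eq_square)
      also have "x * x = \<delta> z" unfolding x_def by (rule sq)
      also have "\<delta> z = (2 - z)^2 - 8*J^2/z" unfolding \<delta>_def ..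
      finally show ?thesis by simp
    qed
    show "roots3 (fst (J, ef z)) (snd (J, ef z)) (((2 - z) - sqrt (\<delta> z)) / 2) z (((2 - z) + sqrt (\<delta> z)) / 2)"
      unfolding x_def[symmetric]
    proof (unfold_locales, simp_all only: fst_conv snd_conv)
      show "0 < ((2 - z) - x) / 2" using h(1) unfolding x_def .
      show "((2 - z) - x) / 2 < z" using h(2) unfolding x_def .
      show "z < ((2 - z) + x) / 2" using h(3) unfolding x_def .
      show "((2 - z) - x) / 2 + z + ((2 - z) + x) / 2 = 2" by (simp add: field_simps)
      show "((2 - z) - x) / 2 * z + z * (((2 - z) + x) / 2) + ((2 - z) + x) / 2 * (((2 - z) - x) / 2) = 4 * ef z"
      proof -
        have "((2 - z) - x) / 2 * z + z * (((2 - z) + x) / 2) = z * (2 - z)" by (simp add: field_simps)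
        moreover have "((2 - z) + x) / 2 * (((2 - z) - x) / 2) = 2*J^2/z" using prod by (simp add: mult.commute)
        ultimately show ?thesis unfolding ef_def using z0 by (simp add: field_simps power2_eq_square power3_eq_cube)
      qed
      show "((2 - z) - x) / 2 * z * (((2 - z) + x) / 2) = 2 * J^2"
      proof -
        have "((2 - z) - x) / 2 * z * (((2 - z) + x) / 2) = z * (((2 - z) - x) / 2 * (((2 - z) + x) / 2))" by simp
        then show ?thesis unfolding prod using z0 by simp
      qed
    qed
  qed
  show ?thesis using main unfolding afb cfb efb aEv eE_def by simp
qed


lemma J_direction:
  assumes Jpos: "J > 0"
  shows "((\<lambda>j. Tper j E) has_real_derivative
           2 * sqrt 2 * (- ((a+c-2*b)/(1*(c-a)) * C3 (c-a) (c-b)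
                + ((-1 + (a+c-2*b)/(1*(c-a)))/2 - 1) * S3 (c-a) (c-b)) / 2) / ((b-a)*(b-c)/(4*J))) (at J)
      \<and> ((\<lambda>j. Mt j E) has_real_derivative
           sqrt 2 * ((-1 + (a+c-2*b)/(1*(c-a)))/2 * Wf (c-a) (c-b)
             + c * (- ((a+c-2*b)/(1*(c-a)) * C3 (c-a) (c-b)
                + ((-1 + (a+c-2*b)/(1*(c-a)))/2 - 1) * S3 (c-a) (c-b)) / 2)
             - ((a+c-2*b)/(1*(c-a)) * C1 (c-a) (c-b)
                + ((-1 + (a+c-2*b)/(1*(c-a)))/2 - 1) * S1 (c-a) (c-b)) / 2) / ((b-a)*(b-c)/(4*J))) (at J)"
proof -
  define \<delta> where "\<delta> z = 4 + 4*z - 3*z^2 - 16*E" for z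
  define \<delta>' :: "real \<Rightarrow> real" where "\<delta>' z = 4 - 6*z" for z
  define jf where "jf z = sqrt ((z^3 - 2*z^2 + 4*E*z)/2)" for z
  define jJ where "jJ = (b-a)*(b-c)/(4*J)"
  have b0: "b > 0" by (rule bpos)
  have ac: "b^2 - 2*b + 4*E = a*c"
  proof -
    have "b^2 - 2*b + 4*E = b^2 - (a+b+c)*b + (a*b+b*c+c*a)" using v1 v2 by simp
    also have "\<dots> = a*c" by (simp add: algebra_simps power2_eq_square)
    finally show ?thesis .
  qed
  have db: "\<delta> b = (c - a)^2"
  proof -
    have "\<delta> b = (2 - b)^2 - 4*(b^2 - 2*b + 4*E)" unfolding \<delta>_def by (simp add: algebra_simps power2_eq_square)
    also have "\<dots> = (a + c)^2 - 4*(a*c)"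
    proof -
      have h2: "2 - b = a + c" using v1 by simp
      show ?thesis unfolding ac h2 ..
    qed
    also have "\<dots> = (c - a)^2" by (simp add: power2_eq_square algebra_simps)
    finally show ?thesis .
  qed
  have sdb: "sqrt (\<delta> b) = c - a" unfolding db using ab bc by simp
  have afb: "((2 - b) - sqrt (\<delta> b)) / 2 = a" unfolding sdb using v1 by simp
  have cfb: "((2 - b) + sqrt (\<delta> b)) / 2 = c" unfolding sdb using v1 by simp
  have gb: "(b^3 - 2*b^2 + 4*E*b)/2 = J^2"
  proof -
    have "b^3 - 2*b^2 + 4*E*b = b * (b^2 - 2*b + 4*E)" by (simp add: algebra_simps power2_eq_square power3_eq_cube)
    also have "\<dots> = a*b*c" unfolding ac by simp
    finally show ?thesis using v3 by simp
  qed
  have jfb: "jf b = J" unfolding jf_def gb using Jpos by simp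
  have jJv: "inverse (sqrt ((b^3 - 2*b^2 + 4*E*b)/2)) / 2 * ((3*b^2 - 4*b + 4*E)/2) = jJ"
  proof -
    have "3*b^2 - 4*b + 4*E = 3*b^2 - 2*(a+b+c)*b + (a*b+b*c+c*a)" using v1 v2 by simp
    also have "\<dots> = (b-a)*(b-c)" by (simp add: algebra_simps power2_eq_square)
    finally have e: "3*b^2 - 4*b + 4*E = (b-a)*(b-c)" .
    show ?thesis unfolding gb e jJ_def using Jpos by (simp add: field_simps)
  qed
  have aJv: "inverse (sqrt (\<delta> b)) / 2 * \<delta>' b = (a+c-2*b)/(1*(c-a))"
  proof -
    have dv: "\<delta>' b = 2*(a+c-2*b)" unfolding \<delta>'_def using v1 by simp
    show ?thesis unfolding sdb dv using ab bc by (simp add: field_simps)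
  qed
  have main: "((\<lambda>y. Tper (fst (y, E)) (snd (y, E))) has_real_derivative
           2 * sqrt 2 * (- ((inverse (sqrt (\<delta> b)) / 2 * \<delta>' b) * C3 (((2 - b) + sqrt (\<delta> b)) / 2 - ((2 - b) - sqrt (\<delta> b)) / 2) (((2 - b) + sqrt (\<delta> b)) / 2 - b)
                + ((-1 + inverse (sqrt (\<delta> b)) / 2 * \<delta>' b)/2 - 1) * S3 (((2 - b) + sqrt (\<delta> b)) / 2 - ((2 - b) - sqrt (\<delta> b)) / 2) (((2 - b) + sqrt (\<delta> b)) / 2 - b)) / 2) / jJ) (at (jf b))
      \<and> ((\<lambda>y. Mt (fst (y, E)) (snd (y, E))) has_real_derivative
           sqrt 2 * ((-1 + inverse (sqrt (\<delta> b)) / 2 * \<delta>' b)/2 * Wf (((2 - b) + sqrt (\<delta> b)) / 2 - ((2 - b) - sqrt (\<delta> b)) / 2) (((2 - b) + sqrt (\<delta> b)) / 2 - b)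
             + ((2 - b) + sqrt (\<delta> b)) / 2 * (- ((inverse (sqrt (\<delta> b)) / 2 * \<delta>' b) * C3 (((2 - b) + sqrt (\<delta> b)) / 2 - ((2 - b) - sqrt (\<delta> b)) / 2) (((2 - b) + sqrt (\<delta> b)) / 2 - b)
                + ((-1 + inverse (sqrt (\<delta> b)) / 2 * \<delta>' b)/2 - 1) * S3 (((2 - b) + sqrt (\<delta> b)) / 2 - ((2 - b) - sqrt (\<delta> b)) / 2) (((2 - b) + sqrt (\<delta> b)) / 2 - b)) / 2)
             - ((inverse (sqrt (\<delta> b)) / 2 * \<delta>' b) * C1 (((2 - b) + sqrt (\<delta> b)) / 2 - ((2 - b) - sqrt (\<delta> b)) / 2) (((2 - b) + sqrt (\<delta> b)) / 2 - b)
                + ((-1 + inverse (sqrt (\<delta> b)) / 2 * \<delta>' b)/2 - 1) * S1 (((2 - b) + sqrt (\<delta> b)) / 2 - ((2 - b) - sqrt (\<delta> b)) / 2) (((2 - b) + sqrt (\<delta> b)) / 2 - b)) / 2) / jJ) (at (jf b))"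
  proof (rule gen_family[where rad = b])
    show "0 < b" by (rule b0)
    fix z :: real
    show "(\<delta> has_real_derivative \<delta>' z) (at z)" unfolding \<delta>_def[abs_def] \<delta>'_def by (rule dJ_deriv)
  next
    show "continuous_on (ball b b) \<delta>'" unfolding \<delta>'_def[abs_def] by (intro continuous_intros)
  next
    have "(b^3 - 2*b^2 + 4*E*b)/2 > 0" unfolding gb using Jpos by simp
    then show "(jf has_real_derivative jJ) (at b)" unfolding jf_def[abs_def] jJv[symmetric]
      by (rule jf_deriv)
  next
    show "jJ \<noteq> 0" unfolding jJ_def using ab bc Jpos by simp
  next
    fix z :: real
    show "isCont jf z" unfolding jf_def[abs_def] by (intro continuous_intros) simp
  next
    show "0 < ((2 - b) - sqrt (\<delta> b)) / 2" unfolding afb by (rule apos)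
    show "((2 - b) - sqrt (\<delta> b)) / 2 < b" unfolding afb by (rule ab)
    show "b < ((2 - b) + sqrt (\<delta> b)) / 2" unfolding cfb by (rule bc)
  next
    fix z assume z: "z \<in> ball b b" and h: "0 < ((2 - z) - sqrt (\<delta> z)) / 2" "((2 - z) - sqrt (\<delta> z)) / 2 < z"
      "z < ((2 - z) + sqrt (\<delta> z)) / 2"
    have z0: "z > 0" using h by linarith
    have hh: "2 < sqrt (\<delta> z) + z * 3" "z * 3 < sqrt (\<delta> z) + 2" using h(2) h(3) by (simp_all add: field_simps)
    have sp: "sqrt (\<delta> z) > 0" using hh by linarith
    then have dz: "\<delta> z > 0" by simp
    have sq: "sqrt (\<delta> z) * sqrt (\<delta> z) = \<delta> z" using dz by simp
    define x where "x = sqrt (\<delta> z)"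
    have prod: "((2 - z) - x) / 2 * (((2 - z) + x) / 2) = z^2 - 2*z + 4*E"
    proof -
      have "((2 - z) - x) / 2 * (((2 - z) + x) / 2) = ((2-z)^2 - x*x)/4" by (simp add: field_simps power2_eq_square)
      also have "x * x = \<delta> z" unfolding x_def by (rule sq)
      also have "\<delta> z = 4 + 4*z - 3*z^2 - 16*E" unfolding \<delta>_def ..
      finally show ?thesis by (simp add: field_simps power2_eq_square)
    qed
    have afp: "0 < ((2 - z) - x) / 2" using h(1) unfolding x_def .
    have cfp: "0 < ((2 - z) + x) / 2" using h(1) h(2) h(3) z0 unfolding x_def by linarith
    have pp: "((2 - z) - x) / 2 * (((2 - z) + x) / 2) > 0" using afp cfp by simp
    have gz: "(z^3 - 2*z^2 + 4*E*z)/2 = z * (z^2 - 2*z + 4*E) / 2" by (simp add: algebra_simps power2_eq_square power3_eq_cube)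
    have gpos: "(z^3 - 2*z^2 + 4*E*z)/2 > 0" unfolding gz prod[symmetric] using z0 pp by simp
    have jz: "(jf z)^2 = z * (z^2 - 2*z + 4*E) / 2" unfolding jf_def using gpos gz by simp
    show "roots3 (fst (jf z, E)) (snd (jf z, E)) (((2 - z) - sqrt (\<delta> z)) / 2) z (((2 - z) + sqrt (\<delta> z)) / 2)"
      unfolding x_def[symmetric]
    proof (unfold_locales, simp_all only: fst_conv snd_conv)
      show "0 < ((2 - z) - x) / 2" using h(1) unfolding x_def .
      show "((2 - z) - x) / 2 < z" using h(2) unfolding x_def .
      show "z < ((2 - z) + x) / 2" using h(3) unfolding x_def .
      show "((2 - z) - x) / 2 + z + ((2 - z) + x) / 2 = 2" by (simp add: field_simps)
      show "((2 - z) - x) / 2 * z + z * (((2 - z) + x) / 2) + ((2 - z) + x) / 2 * (((2 - z) - x) / 2) = 4 * E"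
      proof -
        have "((2 - z) - x) / 2 * z + z * (((2 - z) + x) / 2) = z * (2 - z)" by (simp add: field_simps)
        moreover have "((2 - z) + x) / 2 * (((2 - z) - x) / 2) = z^2 - 2*z + 4*E" using prod by (simp add: mult.commute)
        ultimately show ?thesis by (simp add: field_simps power2_eq_square)
      qed
      show "((2 - z) - x) / 2 * z * (((2 - z) + x) / 2) = 2 * (jf z)^2"
      proof -
        have "((2 - z) - x) / 2 * z * (((2 - z) + x) / 2) = z * (((2 - z) - x) / 2 * (((2 - z) + x) / 2))" by simp
        then show ?thesis unfolding prod jz by simp
      qed
    qed
  qed
  show ?thesis using main unfolding afb cfb jfb aJv jJ_def by simp
qed

end


lemma solveC3:
  fixes A B D C W N Q :: real
  assumes "D*C = W - B*Q" "N = A*B*Q" "A > 0" "D > 0"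
  shows "C = (A*W - N)/(A*D)"
proof -
  have e: "A*W - N = A*(D*C)" unfolding assms(1) assms(2) by (simp add: algebra_simps)
  show ?thesis unfolding e using assms(3,4) by simp
qed

lemma solveS3:
  fixes A B D S W N Q :: real
  assumes "D*S = A*Q - W" "N = A*B*Q" "B > 0" "D > 0"
  shows "S = (N - B*W)/(B*D)"
proof -
  have e: "N - B*W = B*(D*S)" unfolding assms(1) assms(2) by (simp add: algebra_simps)
  show ?thesis unfolding e using assms(3,4) by simp
qed

theorem proposition5:
  fixes J E :: real
  assumes "(J, E) \<in> D1"
  shows "\<exists>PE PJ ME MJ.
           ((\<lambda>e. Pt J e) has_real_derivative PE) (at E) \<and>
           ((\<lambda>j. Pt j E) has_real_derivative PJ) (at J) \<and>
           ((\<lambda>e. Mt J e) has_real_derivative ME) (at E) \<and>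
           ((\<lambda>j. Mt j E) has_real_derivative MJ) (at J) \<and>
           PE * MJ - ME * PJ < 0"
proof -
  obtain a b c where R: "roots3 J E a b c" and Jp: "J > 0" using D1_roots[OF assms] by blast
  interpret roots3 J E a b c by (rule R)
  define A where "A = c - a"
  define B where "B = c - b"
  define W where "W = Wf (c-a) (c-b)"
  define N where "N = Nf (c-a) (c-b)"
  define aE where "aE = (2*a*c-a*b-b*c)/(b*(c-a))"
  define aJ where "aJ = (a+c-2*b)/(1*(c-a))"
  define eE where "eE = (b-a)*(c-b)/(4*b)"
  define jJ where "jJ = (b-a)*(b-c)/(4*J)"
  define tE where "tE = - (aE*C3 (c-a) (c-b) + ((-1+aE)/2-1)*S3 (c-a) (c-b))"
  define mE where "mE = (-1+aE)/2*W + c*(tE/2) - (aE*C1 (c-a) (c-b) + ((-1+aE)/2-1)*S1 (c-a) (c-b))/2"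
  define tJ where "tJ = - (aJ*C3 (c-a) (c-b) + ((-1+aJ)/2-1)*S3 (c-a) (c-b))"
  define mJ where "mJ = (-1+aJ)/2*W + c*(tJ/2) - (aJ*C1 (c-a) (c-b) + ((-1+aJ)/2-1)*S1 (c-a) (c-b))/2"
  have TE: "((\<lambda>e. Tper J e) has_real_derivative 2* sqrt 2*(tE/2)/eE) (at E)"
    using conjunct1[OF E_direction] unfolding tE_def aE_def eE_def .
  have ME: "((\<lambda>e. Mt J e) has_real_derivative sqrt 2*mE/eE) (at E)"
    using conjunct2[OF E_direction] unfolding mE_def tE_def aE_def eE_def W_def .
  have TJ: "((\<lambda>j. Tper j E) has_real_derivative 2* sqrt 2*(tJ/2)/jJ) (at J)"
    using conjunct1[OF J_direction[OF Jp]] unfolding tJ_def aJ_def jJ_def .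
  have MJ: "((\<lambda>j. Mt j E) has_real_derivative sqrt 2*mJ/jJ) (at J)"
    using conjunct2[OF J_direction[OF Jp]] unfolding mJ_def tJ_def aJ_def jJ_def W_def .
  have PE: "((\<lambda>e. Pt J e) has_real_derivative J * (2* sqrt 2*(tE/2)/eE) / 2) (at E)"
    unfolding Pt_def by (intro DERIV_cdivide DERIV_cmult TE)
  have PJ: "((\<lambda>j. Pt j E) has_real_derivative (2* sqrt 2*W + J*(2* sqrt 2*(tJ/2)/jJ))/2) (at J)"
  proof -
    have "((\<lambda>j. j * Tper j E / 2) has_real_derivative (1 * Tper J E + 2* sqrt 2*(tJ/2)/jJ * J) / 2) (at J)"
      by (intro DERIV_cdivide DERIV_mult DERIV_ident TJ)
    moreover have "Tper J E = 2* sqrt 2*W" unfolding W_def by (rule Tper_eq)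
    ultimately show ?thesis unfolding Pt_def by (simp add: algebra_simps)
  qed
  have Ap: "c - a > 0" and Bp: "c - b > 0" using ab bc by auto
  have AB: "c - a \<noteq> c - b" using ab by simp
  have Qv: "N = (c-a)*(c-b)*Qf (c-a) (c-b)" unfolding N_def by (rule NQ_rel[OF Ap Bp AB])
  have C3r: "((c-a) - (c-b)) * C3 (c-a) (c-b) = W - (c-b) * Qf (c-a) (c-b)" unfolding W_def by (rule C3_rel[OF Ap Bp])
  have S3r: "((c-a) - (c-b)) * S3 (c-a) (c-b) = (c-a) * Qf (c-a) (c-b) - W" unfolding W_def by (rule S3_rel[OF Ap Bp])
  have C1r: "((c-a) - (c-b)) * C1 (c-a) (c-b) = N - (c-b) * W" unfolding W_def N_def by (rule C1_rel[OF Ap Bp])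
  have S1r: "((c-a) - (c-b)) * S1 (c-a) (c-b) = (c-a) * W - N" unfolding W_def N_def by (rule S1_rel[OF Ap Bp])
  have dd: "(c-a) - (c-b) = b - a" by simp
  have ba: "b - a > 0" using ab by simp
  have C3v: "C3 (c-a) (c-b) = ((c-a)*W - N)/((c-a)*(b-a))"
    by (rule solveC3[OF C3r[unfolded dd] Qv Ap ba])
  have S3v: "S3 (c-a) (c-b) = (N - (c-b)*W)/((c-b)*(b-a))"
    by (rule solveS3[OF S3r[unfolded dd] Qv Bp ba])
  have C1v: "C1 (c-a) (c-b) = (N - (c-b)*W)/(b-a)" using C1r unfolding dd using ba by (simp add: field_simps)
  have S1v: "S1 (c-a) (c-b) = ((c-a)*W - N)/(b-a)" using S1r unfolding dd using ba by (simp add: field_simps)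
  have Wp: "W > 0" unfolding W_def by (rule Wpos[OF Ap Bp])
  have Yp: "N - (c-b)*W \<ge> 0"
  proof -
    have "C1 (c-a) (c-b) \<ge> 0" by (rule C1_nonneg[OF Ap Bp])
    then show ?thesis using C1r unfolding dd using ba by (metis mult_nonneg_nonneg less_imp_le)
  qed
  have XY: "((c-a)*W - N) - (N - (c-b)*W) \<ge> 0"
  proof -
    have g: "((c-a) - (c-b)) * Gf (c-a) (c-b) = ((c-a) + (c-b)) * W + (-2) * N"
      unfolding W_def N_def by (rule G_rel[OF Ap Bp])
    have "Gf (c-a) (c-b) \<ge> 0" by (rule G_nonneg[OF Ap Bp]) (use ab in simp)
    then have "((c-a) - (c-b)) * Gf (c-a) (c-b) \<ge> 0" using ba unfolding dd by simp
    then show ?thesis unfolding g by (simp add: algebra_simps)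
  qed
  have s2: "sqrt 2 * sqrt 2 = (2::real)" by simp
  have neg: "(J * (2* sqrt 2*(tE/2)/eE) / 2) * (sqrt 2*mJ/jJ) - (sqrt 2*mE/eE) * ((2* sqrt 2*W + J*(2* sqrt 2*(tJ/2)/jJ))/2) < 0"
    by (rule final_alg[OF apos ab bc Jp _ Wp Yp XY C3v S3v C1v S1v aE_def aJ_def eE_def jJ_def s2 tE_def mE_def tJ_def mJ_def])
       (use v3 in simp)
  show ?thesis using PE PJ ME MJ neg by blast
qed


end
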